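(* In the tracking setting described in the context, assume (A1) and (A2). Then for every $a\in\{1,\dots,l\}$ and every $t_0\le t_1<t_2<\infty$: $\phi_a$ is absolutely continuous on $[t_1,t_2]$; $\dot{\phi}_a(t)=-\rho_a(t)\phi_a(t)+\gamma_a(t)$ for almost all $t\in[t_1,t_2]$; and $\eta_a$, $\rho_a$, $\gamma_a$ are Lebesgue integrable on $[t_1,t_2]$.
   Context: Setting: $l\ge2$, $m_1,\dots,m_l\ge1$, $m=\sum m_a\le n$, $X=\mathbb{R}\times\mathbb{R}^n$, $\mathbf{x}=(t,\mathbf{q})$. $\mathbf{f}=(\mathbf{f}_1,\dots,\mathbf{f}_l):X\to\mathbb{R}^m$ differentiable, with $\mathbf{f}_t=\mathsf{D}_t\mathbf{f}$ (blocks $\mathbf{f}_{ta}$), $\mathbf{F}_q=\mathsf{D}_q\mathbf{f}$; $\mathbf{R}:X\to$ invertible $n\times n$ matrices; $\mathbf{p}=(\mathbf{p}_1,\dots,\mathbf{p}_l):\mathbb{R}\to\mathbb{R}^m$ differentiable; $\mathbf{K}=\mathrm{diag}(k_1\mathbf{I}_{m_1},\dots,k_l\mathbf{I}_{m_l})$, $k_a>0$; $\boldsymbol{\Psi}=\mathrm{diag}(\psi_1\mathbf{I}_{m_1},\dots,\psi_l\mathbf{I}_{m_l})$, $\psi_a:X\to[0,1]$; $\mathbf{r}=\boldsymbol{\Psi}(\dot{\mathbf{p}}+\mathbf{K}(\mathbf{p}-\mathbf{f}))$; $\mathsf{D}\mathbf{f},\mathbf{R},\dot{\mathbf{p}},\boldsymbol{\Psi}$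 are continuous. $\mathbf{r}'=\mathbf{r}-\mathbf{f}_t$, $\mathbf{J}=\mathbf{F}_q\mathbf{R}^{-1}$. Orthogonalization: pointwise Gram–Schmidt on rows $\mathbf{j}_i$ of $\mathbf{J}$: $\mathbf{v}_i=\mathbf{j}_i-\sum_{k<i,c_{kk}>0}\langle\hat{\mathbf{j}}_k,\mathbf{j}_i\rangle\hat{\mathbf{j}}_k$, $c_{ii}=\|\mathbf{v}_i\|$, $\hat{\mathbf{j}}_i=\mathbf{v}_i/c_{ii}$ if $c_{ii}>0$, $c_{ik}=\langle\hat{\mathbf{j}}_k,\mathbf{j}_i\rangle$ ($k<i$, $c_{kk}>0$), else $0$; other rows complete an orthonormal basis of the null space of $\mathbf{J}$. $\mathbf{C}=[c_{ik}]_{i,k\le m}$ with blocks $\mathbf{C}_{ab}\in\mathbb{R}^{m_a\times m_b}$, $\mathbf{C}_D=\mathrm{diag}(\mathbf{C}_{aa})$, $\hat{\mathbf{J}}$ top $m$ rows of the orthogonal matrix. $\mathbf{L}=[\mathbf{L}_{ab}]:X\to\mathbb{R}^{m\times m}$ block lower triangular; $\mathbf{u}=\mathbf{R}^{-1}\hat{\mathbf{J}}^T\mathbf{C}_D^T\mathbf{L}\mathbf{r}'$. $\mathbf{q}:[t_0,\infty)\to\mathbb{R}^n$ is a Carathéodory solution of $\dot{\mathbf{q}}=\mathbf{u}(t,\mathbf{q})$: absolutely continuous on compact subintervals, $\mathbf{q}(t_0)=\mathbf{q}_0$, $\dot{\mathbf{q}}(t)=\mathbf{u}(t,\mathbf{q}(t))$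 a.e.; $\mathbf{x}(t)=(t,\mathbf{q}(t))$. Define $\mathbf{e}_a(t,\mathbf{q})=\mathbf{p}_a(t)-\mathbf{f}_a(t,\mathbf{q})$, $\mathbf{A}_{ab}=\sum_{i=b}^a\mathbf{C}_{ai}\mathbf{C}_{ii}^T\mathbf{L}_{ib}$ ($b\le a$), $\mathbf{b}_a=\dot{\mathbf{p}}_a-\mathbf{f}_{ta}-\sum_{b=1}^a\mathbf{A}_{ab}(\psi_b\dot{\mathbf{p}}_b-\mathbf{f}_{tb})-\sum_{b=1}^{a-1}k_b\psi_b\mathbf{A}_{ab}\mathbf{e}_b$; $\phi_a(t)=\|\mathbf{e}_a(\mathbf{x}(t))\|$, $\eta_a(t)=\|(\psi_a\mathbf{C}_{aa}^T\mathbf{L}_{aa}\mathbf{e}_a)(\mathbf{x}(t))\|$, $\rho_a(t)=k_a\psi_a(\mathbf{x}(t))\phi_a^+(t)^2\langle\mathbf{e}_a,\mathbf{A}_{aa}\mathbf{e}_a\rangle(\mathbf{x}(t))$, $\gamma_a(t)=\phi_a^+(t)\langle\mathbf{e}_a,\mathbf{b}_a\rangle(\mathbf{x}(t))$, where $\phi_a^+=1/\phi_a$ if $\phi_a\ne0$ and $0$ otherwise. (A1): $\mathbf{C}$ is bounded on $X$ and $t\mapsto\mathbf{C}(\mathbf{x}(t))$ is measurable; (A2): $\mathbf{L}$ is bounded on $X$ and $t\mapsto\mathbf{L}(\mathbf{x}(t))$ is measurable. *)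

theory Defs
  imports "HOL-Analysis.Analysis"
begin

definition abs_cont_on :: "(real \<Rightarrow> 'a::real_normed_vector) \<Rightarrow> real \<Rightarrow> real \<Rightarrow> bool" where
  "abs_cont_on g a b \<longleftrightarrow>
     (\<forall>\<epsilon>>0. \<exists>\<delta>>0. \<forall>(d::nat) (u::nat \<Rightarrow> real) (v::nat \<Rightarrow> real).
        (\<forall>j<d. a \<le> u j \<and> u j \<le> v j \<and> v j \<le> b) \<and>
        (\<forall>i<d. \<forall>j<d. i \<noteq> j \<longrightarrow> v i \<le> u j \<or> v j \<le> u i) \<and>
        (\<Sum>j<d. v j - u j) < \<delta>
        \<longrightarrow> (\<Sum>j<d. norm (g (v j) - g (u j))) < \<epsilon>)"

section \<open>Block structure: blocks a = 1..l of sizes ms a; 0-based row indices\<close>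

definition msum :: "(nat \<Rightarrow> nat) \<Rightarrow> nat \<Rightarrow> nat" where
  "msum ms l = (\<Sum>a\<in>{1..l}. ms a)"

definition boff :: "(nat \<Rightarrow> nat) \<Rightarrow> nat \<Rightarrow> nat" where
  "boff ms a = (\<Sum>b\<in>{1..<a}. ms b)"

definition blk :: "(nat \<Rightarrow> nat) \<Rightarrow> nat \<Rightarrow> nat set" where
  "blk ms a = {boff ms a ..< boff ms a + ms a}"

definition blk_of :: "(nat \<Rightarrow> nat) \<Rightarrow> nat \<Rightarrow> nat \<Rightarrow> nat" where
  "blk_of ms l i = (THE a. a \<in> {1..l} \<and> i \<in> blk ms a)"

text \<open>gs_hats J i k (k < i) is the normalized row hat-j_k, or 0 when c_kk = 0.\<close>
primrec gs_hats :: "(nat \<Rightarrow> 'a::real_inner) \<Rightarrow> nat \<Rightarrow> nat \<Rightarrow> 'a" where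
  "gs_hats J 0 = (\<lambda>_. 0)"
| "gs_hats J (Suc i) =
     (let h = gs_hats J i;
          v = J i - (\<Sum>k\<in>{k. k < i \<and> h k \<noteq> 0}. (h k \<bullet> J i) *\<^sub>R h k)
      in h(i := (if norm v > 0 then (1 / norm v) *\<^sub>R v else 0)))"

definition gs_hat :: "(nat \<Rightarrow> 'a::real_inner) \<Rightarrow> nat \<Rightarrow> 'a" where
  "gs_hat J i = gs_hats J (Suc i) i"

definition gs_v :: "(nat \<Rightarrow> 'a::real_inner) \<Rightarrow> nat \<Rightarrow> 'a" where
  "gs_v J i = J i - (\<Sum>k\<in>{k. k < i \<and> gs_hat J k \<noteq> 0}. (gs_hat J k \<bullet> J i) *\<^sub>R gs_hat J k)"

definition gs_C :: "(nat \<Rightarrow> 'a::real_inner) \<Rightarrow> nat \<Rightarrow> nat \<Rightarrow> real" where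
  "gs_C J i k = (if k = i then norm (gs_v J i)
                 else if k < i \<and> norm (gs_v J k) > 0 then gs_hat J k \<bullet> J i else 0)"

type_synonym 'n pt = "real \<times> (real^'n)"

text \<open>f_t and the rows of F_q = D_q f (row i of F_q is Fq f x i).\<close>
definition ft :: "(nat \<Rightarrow> ('n::finite) pt \<Rightarrow> real) \<Rightarrow> 'n pt \<Rightarrow> nat \<Rightarrow> real" where
  "ft f x i = frechet_derivative (f i) (at x) (1, 0)"

definition Fq :: "(nat \<Rightarrow> ('n::finite) pt \<Rightarrow> real) \<Rightarrow> 'n pt \<Rightarrow> nat \<Rightarrow> real^'n" where
  "Fq f x i = (\<chi> j. frechet_derivative (f i) (at x) (0, axis j 1))"

definition pdot :: "(nat \<Rightarrow> real \<Rightarrow> real) \<Rightarrow> nat \<Rightarrow> real \<Rightarrow> real" where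
  "pdot p i t = deriv (p i) t"

definition Jrows :: "(('n::finite) pt \<Rightarrow> real^'n^'n) \<Rightarrow> (nat \<Rightarrow> 'n pt \<Rightarrow> real) \<Rightarrow> 'n pt \<Rightarrow> nat \<Rightarrow> real^'n" where
  "Jrows R f x i = Fq f x i v* matrix_inv (R x)"

definition Cmat :: "(('n::finite) pt \<Rightarrow> real^'n^'n) \<Rightarrow> (nat \<Rightarrow> 'n pt \<Rightarrow> real) \<Rightarrow> 'n pt \<Rightarrow> nat \<Rightarrow> nat \<Rightarrow> real" where
  "Cmat R f x i k = gs_C (Jrows R f x) i k"

definition CDmat :: "(nat \<Rightarrow> nat) \<Rightarrow> nat \<Rightarrow> (('n::finite) pt \<Rightarrow> real^'n^'n) \<Rightarrow> (nat \<Rightarrow> 'n pt \<Rightarrow> real)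
     \<Rightarrow> 'n pt \<Rightarrow> nat \<Rightarrow> nat \<Rightarrow> real" where
  "CDmat ms l R f x i k = (if blk_of ms l i = blk_of ms l k then Cmat R f x i k else 0)"

definition rvec :: "(nat \<Rightarrow> nat) \<Rightarrow> nat \<Rightarrow> (nat \<Rightarrow> real) \<Rightarrow> (nat \<Rightarrow> ('n::finite) pt \<Rightarrow> real)
     \<Rightarrow> (nat \<Rightarrow> real \<Rightarrow> real) \<Rightarrow> (nat \<Rightarrow> 'n pt \<Rightarrow> real) \<Rightarrow> 'n pt \<Rightarrow> nat \<Rightarrow> real" where
  "rvec ms l k psi p f x i =
     psi (blk_of ms l i) x * (pdot p i (fst x) + k (blk_of ms l i) * (p i (fst x) - f i x))"

definition rvec' :: "(nat \<Rightarrow> nat) \<Rightarrow> nat \<Rightarrow> (nat \<Rightarrow> real) \<Rightarrow> (nat \<Rightarrow> ('n::finite) pt \<Rightarrow> real)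
     \<Rightarrow> (nat \<Rightarrow> real \<Rightarrow> real) \<Rightarrow> (nat \<Rightarrow> 'n pt \<Rightarrow> real) \<Rightarrow> 'n pt \<Rightarrow> nat \<Rightarrow> real" where
  "rvec' ms l k psi p f x i = rvec ms l k psi p f x i - ft f x i"

text \<open>u = R^{-1} hat-J^T C_D^T L r'.  Row i of hat-J is gs_hat (J x) i when c_ii > 0; rows
  with c_ii = 0 are multiplied by zero column entries of C_D^T, so they are taken to be 0.\<close>
definition uctrl :: "(nat \<Rightarrow> nat) \<Rightarrow> nat \<Rightarrow> (nat \<Rightarrow> real) \<Rightarrow> (nat \<Rightarrow> ('n::finite) pt \<Rightarrow> real)
     \<Rightarrow> (nat \<Rightarrow> real \<Rightarrow> real) \<Rightarrow> (nat \<Rightarrow> 'n pt \<Rightarrow> real) \<Rightarrow> ('n pt \<Rightarrow> real^'n^'n)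
     \<Rightarrow> ('n pt \<Rightarrow> nat \<Rightarrow> nat \<Rightarrow> real) \<Rightarrow> 'n pt \<Rightarrow> real^'n" where
  "uctrl ms l k psi p f R L x =
     matrix_inv (R x) *v
       (\<Sum>i<msum ms l.
          (\<Sum>kk<msum ms l. CDmat ms l R f x kk i *
              (\<Sum>j<msum ms l. L x kk j * rvec' ms l k psi p f x j)) *\<^sub>R gs_hat (Jrows R f x) i)"

definition evec :: "(nat \<Rightarrow> real \<Rightarrow> real) \<Rightarrow> (nat \<Rightarrow> ('n::finite) pt \<Rightarrow> real) \<Rightarrow> 'n pt \<Rightarrow> nat \<Rightarrow> real" where
  "evec p f x i = p i (fst x) - f i x"

definition bnorm :: "(nat \<Rightarrow> nat) \<Rightarrow> nat \<Rightarrow> (nat \<Rightarrow> real) \<Rightarrow> real" where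
  "bnorm ms a w = sqrt (\<Sum>i\<in>blk ms a. (w i)\<^sup>2)"

definition pinv :: "real \<Rightarrow> real" where
  "pinv y = (if y \<noteq> 0 then 1 / y else 0)"

text \<open>Entry (r,s) (r in block a, s in block b) of A_ab = sum_{c=b..a} C_ac C_cc^T L_cb.\<close>
definition Amat :: "(nat \<Rightarrow> nat) \<Rightarrow> (('n::finite) pt \<Rightarrow> real^'n^'n) \<Rightarrow> (nat \<Rightarrow> 'n pt \<Rightarrow> real)
     \<Rightarrow> ('n pt \<Rightarrow> nat \<Rightarrow> nat \<Rightarrow> real) \<Rightarrow> 'n pt \<Rightarrow> nat \<Rightarrow> nat \<Rightarrow> nat \<Rightarrow> nat \<Rightarrow> real" where
  "Amat ms R f L x a b r s =
     (\<Sum>c\<in>{b..a}. \<Sum>u\<in>blk ms c. \<Sum>v\<in>blk ms c. Cmat R f x r u * Cmat R f x v u * L x v s)"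

definition bvec :: "(nat \<Rightarrow> nat) \<Rightarrow> (nat \<Rightarrow> real) \<Rightarrow> (nat \<Rightarrow> ('n::finite) pt \<Rightarrow> real)
     \<Rightarrow> (nat \<Rightarrow> real \<Rightarrow> real) \<Rightarrow> (nat \<Rightarrow> 'n pt \<Rightarrow> real) \<Rightarrow> ('n pt \<Rightarrow> real^'n^'n)
     \<Rightarrow> ('n pt \<Rightarrow> nat \<Rightarrow> nat \<Rightarrow> real) \<Rightarrow> 'n pt \<Rightarrow> nat \<Rightarrow> nat \<Rightarrow> real" where
  "bvec ms k psi p f R L x a r =
     pdot p r (fst x) - ft f x r
     - (\<Sum>b\<in>{1..a}. \<Sum>s\<in>blk ms b.
          Amat ms R f L x a b r s * (psi b x * pdot p s (fst x) - ft f x s))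
     - (\<Sum>b\<in>{1..<a}. k b * psi b x * (\<Sum>s\<in>blk ms b. Amat ms R f L x a b r s * evec p f x s))"

definition phi_a :: "(nat \<Rightarrow> nat) \<Rightarrow> (nat \<Rightarrow> real \<Rightarrow> real) \<Rightarrow> (nat \<Rightarrow> ('n::finite) pt \<Rightarrow> real)
     \<Rightarrow> (real \<Rightarrow> real^'n) \<Rightarrow> nat \<Rightarrow> real \<Rightarrow> real" where
  "phi_a ms p f q a t = bnorm ms a (evec p f (t, q t))"

definition eta_a :: "(nat \<Rightarrow> nat) \<Rightarrow> (nat \<Rightarrow> ('n::finite) pt \<Rightarrow> real) \<Rightarrow> (nat \<Rightarrow> real \<Rightarrow> real)
     \<Rightarrow> (nat \<Rightarrow> 'n pt \<Rightarrow> real) \<Rightarrow> ('n pt \<Rightarrow> real^'n^'n) \<Rightarrow> ('n pt \<Rightarrow> nat \<Rightarrow> nat \<Rightarrow> real)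
     \<Rightarrow> (real \<Rightarrow> real^'n) \<Rightarrow> nat \<Rightarrow> real \<Rightarrow> real" where
  "eta_a ms psi p f R L q a t =
     (let x = (t, q t) in
      bnorm ms a (\<lambda>i. psi a x * (\<Sum>kk\<in>blk ms a. Cmat R f x kk i *
                                   (\<Sum>j\<in>blk ms a. L x kk j * evec p f x j))))"

definition rho_a :: "(nat \<Rightarrow> nat) \<Rightarrow> (nat \<Rightarrow> real) \<Rightarrow> (nat \<Rightarrow> ('n::finite) pt \<Rightarrow> real) \<Rightarrow> (nat \<Rightarrow> real \<Rightarrow> real)
     \<Rightarrow> (nat \<Rightarrow> 'n pt \<Rightarrow> real) \<Rightarrow> ('n pt \<Rightarrow> real^'n^'n) \<Rightarrow> ('n pt \<Rightarrow> nat \<Rightarrow> nat \<Rightarrow> real)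
     \<Rightarrow> (real \<Rightarrow> real^'n) \<Rightarrow> nat \<Rightarrow> real \<Rightarrow> real" where
  "rho_a ms k psi p f R L q a t =
     (let x = (t, q t) in
      k a * psi a x * (pinv (phi_a ms p f q a t))\<^sup>2 *
        (\<Sum>r\<in>blk ms a. evec p f x r * (\<Sum>s\<in>blk ms a. Amat ms R f L x a a r s * evec p f x s)))"

definition gamma_a :: "(nat \<Rightarrow> nat) \<Rightarrow> (nat \<Rightarrow> real) \<Rightarrow> (nat \<Rightarrow> ('n::finite) pt \<Rightarrow> real) \<Rightarrow> (nat \<Rightarrow> real \<Rightarrow> real)
     \<Rightarrow> (nat \<Rightarrow> 'n pt \<Rightarrow> real) \<Rightarrow> ('n pt \<Rightarrow> real^'n^'n) \<Rightarrow> ('n pt \<Rightarrow> nat \<Rightarrow> nat \<Rightarrow> real)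
     \<Rightarrow> (real \<Rightarrow> real^'n) \<Rightarrow> nat \<Rightarrow> real \<Rightarrow> real" where
  "gamma_a ms k psi p f R L q a t =
     (let x = (t, q t) in
      pinv (phi_a ms p f q a t) *
        (\<Sum>r\<in>blk ms a. evec p f x r * bvec ms k psi p f R L x a r))"

end

theory Submission
  imports Defs
begin


lemma gs_hats_eq: "gs_hats J n k = (if k < n then gs_hat J k else 0)"
proof (induction n arbitrary: k)
  case 0 then show ?case by simp
next
  case (Suc n)
  show ?case
  proof (cases "k = n")
    case True then show ?thesis by (simp add: gs_hat_def)
  next
    case False
    then show ?thesis using Suc by (simp add: Let_def)
  qed
qed

lemma gs_hat_v: "gs_hat J i = (if norm (gs_v J i) > 0 then (1 / norm (gs_v J i)) *\<^sub>R gs_v J i else 0)"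
proof -
  have S: "{k. k < i \<and> gs_hats J i k \<noteq> 0} = {k. k < i \<and> gs_hat J k \<noteq> 0}"
    by (auto simp: gs_hats_eq)
  have T: "(\<Sum>k\<in>{k. k < i \<and> gs_hat J k \<noteq> 0}. (gs_hats J i k \<bullet> J i) *\<^sub>R gs_hats J i k)
      = (\<Sum>k\<in>{k. k < i \<and> gs_hat J k \<noteq> 0}. (gs_hat J k \<bullet> J i) *\<^sub>R gs_hat J k)"
    by (rule sum.cong) (auto simp: gs_hats_eq)
  have "gs_hat J i = (let v = J i - (\<Sum>k\<in>{k. k < i \<and> gs_hats J i k \<noteq> 0}. (gs_hats J i k \<bullet> J i) *\<^sub>R gs_hats J i k)
      in if norm v > 0 then (1 / norm v) *\<^sub>R v else 0)"
    unfolding gs_hat_def by (simp only: gs_hats.simps Let_def fun_upd_same)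
  also have "\<dots> = (if norm (gs_v J i) > 0 then (1 / norm (gs_v J i)) *\<^sub>R gs_v J i else 0)"
    unfolding S T gs_v_def Let_def ..
  finally show ?thesis .
qed

lemma gs_v_hat: "gs_v J i = norm (gs_v J i) *\<^sub>R gs_hat J i"
  by (subst gs_hat_v) auto

lemma gs_hat_ne: "gs_hat J i \<noteq> 0 \<longleftrightarrow> norm (gs_v J i) > 0"
  by (subst gs_hat_v) auto

lemma gs_J_expand: "J i = norm (gs_v J i) *\<^sub>R gs_hat J i
     + (\<Sum>k\<in>{k. k < i \<and> gs_hat J k \<noteq> 0}. (gs_hat J k \<bullet> J i) *\<^sub>R gs_hat J k)"
  using gs_v_hat[of J i] unfolding gs_v_def by (metis (no_types, lifting) diff_add_cancel gs_v_def)

lemma gs_orth: "\<forall>j<i. gs_hat J j \<bullet> gs_hat J i = 0"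
proof (induction i rule: less_induct)
  case (less i)
  have unit: "gs_hat J j \<bullet> gs_hat J j = 1" if "gs_hat J j \<noteq> 0" for j
  proof -
    have n: "norm (gs_v J j) > 0" using that gs_hat_ne by blast
    have "gs_hat J j \<bullet> gs_hat J j = (1 / norm (gs_v J j))^2 * (gs_v J j \<bullet> gs_v J j)"
      using n by (subst (1 2) gs_hat_v) (simp add: power2_eq_square)
    also have "\<dots> = 1" using n by (simp add: power2_norm_eq_inner[symmetric] field_simps)
    finally show ?thesis .
  qed
  show ?case
  proof (intro allI impI)
    fix j assume ji: "j < i"
    have "gs_hat J j \<bullet> gs_v J i = 0"
    proof (cases "gs_hat J j = 0")
      case True then show ?thesis by simp
    next
      case False
      have "gs_hat J j \<bullet> gs_v J i = gs_hat J j \<bullet> J i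
          - (\<Sum>k\<in>{k. k < i \<and> gs_hat J k \<noteq> 0}. (gs_hat J k \<bullet> J i) * (gs_hat J j \<bullet> gs_hat J k))"
        unfolding gs_v_def by (simp add: inner_diff_right inner_sum_right)
      also have "(\<Sum>k\<in>{k. k < i \<and> gs_hat J k \<noteq> 0}. (gs_hat J k \<bullet> J i) * (gs_hat J j \<bullet> gs_hat J k))
          = (\<Sum>k\<in>{k. k < i \<and> gs_hat J k \<noteq> 0}. if k = j then gs_hat J j \<bullet> J i else 0)"
      proof (rule sum.cong)
        fix k assume k: "k \<in> {k. k < i \<and> gs_hat J k \<noteq> 0}"
        show "(gs_hat J k \<bullet> J i) * (gs_hat J j \<bullet> gs_hat J k) = (if k = j then gs_hat J j \<bullet> J i else 0)"
        proof (cases "k = j")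
          case True then show ?thesis using unit False by simp
        next
          case ne: False
          have "gs_hat J j \<bullet> gs_hat J k = 0"
          proof (cases "j < k")
            case True then show ?thesis using less k by auto
          next
            case False then have "k < j" using ne by simp
            then show ?thesis using less ji by (metis inner_commute)
          qed
          then show ?thesis using ne by simp
        qed
      qed simp
      also have "\<dots> = gs_hat J j \<bullet> J i" using ji False by (simp add: sum.delta)
      finally show ?thesis by simp
    qed
    then show "gs_hat J j \<bullet> gs_hat J i = 0"
      by (subst gs_hat_v) (simp add: inner_scaleR_right)
  qed
qed

lemma gs_key: "J r \<bullet> gs_hat J i = gs_C J r i"
proof -
  have orth: "gs_hat J j \<bullet> gs_hat J i = 0" if "j \<noteq> i" for j
    using gs_orth that by (metis inner_commute nat_neq_iff)
  have unit: "norm (gs_v J i) * (gs_hat J i \<bullet> gs_hat J i) = norm (gs_v J i)"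
  proof (cases "gs_hat J i = 0")
    case True then show ?thesis using gs_hat_ne by auto
  next
    case False
    then have n: "norm (gs_v J i) > 0" using gs_hat_ne by blast
    have "gs_hat J i \<bullet> gs_hat J i = (1 / norm (gs_v J i))^2 * (gs_v J i \<bullet> gs_v J i)"
      using n by (subst (1 2) gs_hat_v) (simp add: power2_eq_square)
    also have "\<dots> = 1" using n by (simp add: power2_norm_eq_inner[symmetric] field_simps)
    finally show ?thesis by simp
  qed
  consider "i > r" | "i = r" | "i < r" by linarith
  then show ?thesis
  proof cases
    case 1
    have "J r \<bullet> gs_hat J i = norm (gs_v J r) * (gs_hat J r \<bullet> gs_hat J i)
       + (\<Sum>k\<in>{k. k < r \<and> gs_hat J k \<noteq> 0}. (gs_hat J k \<bullet> J r) * (gs_hat J k \<bullet> gs_hat J i))"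
      by (subst gs_J_expand) (simp add: inner_add_left inner_sum_left)
    also have "\<dots> = 0" using 1 orth by (simp add: sum.neutral)
    finally show ?thesis using 1 by (simp add: gs_C_def)
  next
    case 2
    have "J r \<bullet> gs_hat J i = norm (gs_v J r) * (gs_hat J r \<bullet> gs_hat J i)
       + (\<Sum>k\<in>{k. k < r \<and> gs_hat J k \<noteq> 0}. (gs_hat J k \<bullet> J r) * (gs_hat J k \<bullet> gs_hat J i))"
      by (subst gs_J_expand) (simp add: inner_add_left inner_sum_left)
    also have "\<dots> = norm (gs_v J i)" using 2 orth unit by (simp add: sum.neutral)
    finally show ?thesis using 2 by (simp add: gs_C_def)
  next
    case 3
    then show ?thesis using gs_hat_ne[of J i] by (auto simp: gs_C_def inner_commute)
  qed
qed




lemma boff_Suc: "a \<ge> 1 \<Longrightarrow> boff ms (Suc a) = boff ms a + ms a"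
  unfolding boff_def by (simp add: atLeastLessThanSuc add.commute)

lemma boff_mono: "a \<le> b \<Longrightarrow> boff ms a \<le> boff ms b"
  unfolding boff_def by (rule sum_mono2) auto

lemma msum_boff: "msum ms l = boff ms (Suc l)"
  unfolding msum_def boff_def by (simp add: atLeastLessThanSuc_atLeastAtMost)

lemma blk_order: "1 \<le> a \<Longrightarrow> a < b \<Longrightarrow> i \<in> blk ms a \<Longrightarrow> j \<in> blk ms b \<Longrightarrow> i < j"
proof -
  assume h: "1 \<le> a" "a < b" "i \<in> blk ms a" "j \<in> blk ms b"
  have "i < boff ms (Suc a)" using h boff_Suc[of a ms] by (auto simp: blk_def)
  also have "\<dots> \<le> boff ms b" using h by (intro boff_mono) simp
  also have "\<dots> \<le> j" using h by (auto simp: blk_def)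
  finally show ?thesis .
qed

lemma blk_sub: "a \<in> {1..l} \<Longrightarrow> blk ms a \<subseteq> {..<msum ms l}"
proof
  fix i assume h: "a \<in> {1..l}" "i \<in> blk ms a"
  have "i < boff ms (Suc a)" using h boff_Suc[of a ms] by (auto simp: blk_def)
  also have "\<dots> \<le> msum ms l" using h unfolding msum_boff by (intro boff_mono) simp
  finally show "i \<in> {..<msum ms l}" by simp
qed

lemma blk_disj: "a \<in> {1..l} \<Longrightarrow> b \<in> {1..l} \<Longrightarrow> a \<noteq> b \<Longrightarrow> blk ms a \<inter> blk ms b = {}"
proof (rule ccontr)
  assume h: "a \<in> {1..l}" "b \<in> {1..l}" "a \<noteq> b" "blk ms a \<inter> blk ms b \<noteq> {}"
  then obtain i where i: "i \<in> blk ms a" "i \<in> blk ms b" by blast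
  show False
  proof (cases "a < b")
    case True then show ?thesis using blk_order[of a b i ms i] h i by simp
  next
    case False then have "b < a" using h by simp
    then show ?thesis using blk_order[of b a i ms i] h i by simp
  qed
qed

lemma blk_union: "{..<msum ms l} = (\<Union>a\<in>{1..l}. blk ms a)"
proof (induction l)
  case 0 then show ?case by (simp add: msum_def)
next
  case (Suc l)
  have "{..<msum ms (Suc l)} = {..<msum ms l} \<union> blk ms (Suc l)"
    unfolding msum_boff blk_def using boff_Suc[of "Suc l" ms] by auto
  also have "\<dots> = (\<Union>a\<in>{1..Suc l}. blk ms a)"
    using Suc by (auto simp: atLeastAtMostSuc_conv)
  finally show ?case .
qed

lemma blk_of_eq: "a \<in> {1..l} \<Longrightarrow> i \<in> blk ms a \<Longrightarrow> blk_of ms l i = a"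
  unfolding blk_of_def
  by (rule the_equality) (use blk_disj[of a l _ ms] in auto)

lemma blk_ex: "i < msum ms l \<Longrightarrow> \<exists>a\<in>{1..l}. i \<in> blk ms a"
  using blk_union[of ms l] by auto

lemma finite_blk[simp]: "finite (blk ms a)" by (simp add: blk_def)

lemma sum_blocks: "(\<Sum>i<msum ms l. g i) = (\<Sum>c\<in>{1..l}. \<Sum>i\<in>blk ms c. g i)"
  unfolding blk_union
proof (rule sum.UNION_disjoint)
  show "\<forall>i\<in>{1..l}. \<forall>j\<in>{1..l}. i \<noteq> j \<longrightarrow> blk ms i \<inter> blk ms j = {}"
    using blk_disj by blast
qed simp_all

lemma swap_tri: "(\<Sum>c\<in>{1..a}. \<Sum>b\<in>{1..c}. G b c) = (\<Sum>b\<in>{1..(a::nat)}. \<Sum>c\<in>{b..a}. G b c)"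
proof -
  have "(\<Sum>c\<in>{1..a}. \<Sum>b\<in>{y. y \<in> {1..a} \<and> y \<le> c}. G b c)
      = (\<Sum>b\<in>{1..a}. \<Sum>c\<in>{x. x \<in> {1..a} \<and> b \<le> x}. G b c)"
    by (rule sum.swap_restrict) auto
  moreover have "\<And>c. c \<in> {1..a} \<Longrightarrow> {y. y \<in> {1..a} \<and> y \<le> c} = {1..c}" by auto
  moreover have "\<And>b. b \<in> {1..a} \<Longrightarrow> {x. x \<in> {1..a} \<and> b \<le> x} = {b..a}" by auto
  ultimately show ?thesis by (metis (no_types, lifting) sum.cong)
qed




lemma Cmat_upper0: "r < u \<Longrightarrow> Cmat R f x r u = 0"
  by (simp add: Cmat_def gs_C_def)

lemma fq_u_C:
  "Fq f x r \<bullet> uctrl ms l k psi p f R L x =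
    (\<Sum>i<msum ms l. (\<Sum>kk<msum ms l. CDmat ms l R f x kk i *
       (\<Sum>j<msum ms l. L x kk j * rvec' ms l k psi p f x j)) * Cmat R f x r i)"
proof -
  have eq: "Fq f x r \<bullet> uctrl ms l k psi p f R L x = Jrows R f x r \<bullet>
     (\<Sum>i<msum ms l.
          (\<Sum>kk<msum ms l. CDmat ms l R f x kk i *
              (\<Sum>j<msum ms l. L x kk j * rvec' ms l k psi p f x j)) *\<^sub>R gs_hat (Jrows R f x) i)"
    unfolding uctrl_def Jrows_def by (simp add: dot_lmul_matrix)
  show ?thesis
    unfolding eq inner_sum_right inner_scaleR_right gs_key Cmat_def by simp
qed

lemma coef_blk:
  assumes c: "c \<in> {1..l}" and u: "u \<in> blk ms c"
  shows "(\<Sum>kk<msum ms l. CDmat ms l R f x kk u * X kk) = (\<Sum>v\<in>blk ms c. Cmat R f x v u * X v)"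
proof -
  have "(\<Sum>kk<msum ms l. CDmat ms l R f x kk u * X kk)
      = (\<Sum>kk<msum ms l. if kk \<in> blk ms c then Cmat R f x kk u * X kk else 0)"
  proof (rule sum.cong)
    fix kk assume "kk \<in> {..<msum ms l}"
    then obtain c' where c': "c' \<in> {1..l}" "kk \<in> blk ms c'" using blk_ex by blast
    have bu: "blk_of ms l u = c" using blk_of_eq c u by blast
    have bk: "blk_of ms l kk = c'" using blk_of_eq c' by blast
    have "kk \<in> blk ms c \<longleftrightarrow> c' = c" using blk_disj[of c l c' ms] c c' by auto
    then show "CDmat ms l R f x kk u * X kk = (if kk \<in> blk ms c then Cmat R f x kk u * X kk else 0)"
      unfolding CDmat_def bu bk by auto
  qed simp
  also have "\<dots> = (\<Sum>v\<in>{..<msum ms l} \<inter> blk ms c. Cmat R f x v u * X v)"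
    by (simp add: sum.inter_restrict)
  also have "{..<msum ms l} \<inter> blk ms c = blk ms c" using blk_sub[OF c] by blast
  finally show ?thesis .
qed

lemma Lsum_blk:
  fixes L :: "'x \<Rightarrow> nat \<Rightarrow> nat \<Rightarrow> real"
  assumes c: "c \<in> {1..l}" and v: "v \<in> blk ms c"
    and L_lower: "\<forall>x i j. i < msum ms l \<and> j < msum ms l \<and> blk_of ms l i < blk_of ms l j
                     \<longrightarrow> L x i j = 0"
  shows "(\<Sum>j<msum ms l. L x v j * Y j) = (\<Sum>b\<in>{1..c}. \<Sum>s\<in>blk ms b. L x v s * Y s)"
proof -
  have "(\<Sum>j<msum ms l. L x v j * Y j) = (\<Sum>b\<in>{1..l}. \<Sum>s\<in>blk ms b. L x v s * Y s)"
    by (rule sum_blocks)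
  also have "\<dots> = (\<Sum>b\<in>{1..c}. \<Sum>s\<in>blk ms b. L x v s * Y s)"
  proof (rule sum.mono_neutral_right)
    show "\<forall>b\<in>{1..l} - {1..c}. (\<Sum>s\<in>blk ms b. L x v s * Y s) = 0"
    proof
      fix b assume b: "b \<in> {1..l} - {1..c}"
      have "L x v s = 0" if s: "s \<in> blk ms b" for s
      proof -
        have "blk_of ms l v = c" using blk_of_eq c v by blast
        moreover have "blk_of ms l s = b" using blk_of_eq s b by blast
        moreover have "v < msum ms l" using blk_sub[OF c] v by blast
        moreover have "s < msum ms l" using blk_sub[of b l ms] b s by blast
        ultimately show ?thesis using L_lower b by auto
      qed
      then show "(\<Sum>s\<in>blk ms b. L x v s * Y s) = 0" by (intro sum.neutral) simp
    qed
  qed (use c in auto)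
  finally show ?thesis .
qed

lemma Csum_blk:
  assumes a: "a \<in> {1..l}" and r: "r \<in> blk ms a"
  shows "(\<Sum>i<msum ms l. Z i * Cmat R f x r i) = (\<Sum>c\<in>{1..a}. \<Sum>u\<in>blk ms c. Cmat R f x r u * Z u)"
proof -
  have "(\<Sum>i<msum ms l. Z i * Cmat R f x r i) = (\<Sum>c\<in>{1..l}. \<Sum>u\<in>blk ms c. Cmat R f x r u * Z u)"
    by (subst sum_blocks) (simp add: mult.commute)
  also have "\<dots> = (\<Sum>c\<in>{1..a}. \<Sum>u\<in>blk ms c. Cmat R f x r u * Z u)"
  proof (rule sum.mono_neutral_right)
    show "\<forall>c\<in>{1..l} - {1..a}. (\<Sum>u\<in>blk ms c. Cmat R f x r u * Z u) = 0"
    proof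
      fix c assume c: "c \<in> {1..l} - {1..a}"
      have "Cmat R f x r u = 0" if u: "u \<in> blk ms c" for u
      proof -
        have "r < u" using blk_order[of a c r ms u] a c r u by auto
        then show ?thesis by (rule Cmat_upper0)
      qed
      then show "(\<Sum>u\<in>blk ms c. Cmat R f x r u * Z u) = 0" by (intro sum.neutral) simp
    qed
  qed (use a in auto)
  finally show ?thesis .
qed

lemma fq_u_A:
  fixes L :: "real \<times> (real^'n) \<Rightarrow> nat \<Rightarrow> nat \<Rightarrow> real"
    and f :: "nat \<Rightarrow> real \<times> (real^'n) \<Rightarrow> real"
  assumes a: "a \<in> {1..l}" and r: "r \<in> blk ms a"
    and L_lower: "\<forall>x i j. i < msum ms l \<and> j < msum ms l \<and> blk_of ms l i < blk_of ms l j
                     \<longrightarrow> L x i j = 0"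
  shows "Fq f x r \<bullet> uctrl ms l k psi p f R L x =
     (\<Sum>b\<in>{1..a}. \<Sum>s\<in>blk ms b. Amat ms R f L x a b r s * rvec' ms l k psi p f x s)"
proof -
  define rr where "rr = rvec' ms l k psi p f x"
  define C where "C = Cmat R f x"
  define H where "H b c = (\<Sum>u\<in>blk ms c. \<Sum>v\<in>blk ms c. \<Sum>s\<in>blk ms b. C r u * C v u * L x v s * rr s)" for b c
  have "Fq f x r \<bullet> uctrl ms l k psi p f R L x =
     (\<Sum>c\<in>{1..a}. \<Sum>u\<in>blk ms c. C r u * (\<Sum>v\<in>blk ms c. C v u * (\<Sum>b\<in>{1..c}. \<Sum>s\<in>blk ms b. L x v s * rr s)))"
    unfolding fq_u_C unfolding Csum_blk[OF a r] unfolding rr_def[symmetric] C_def[symmetric]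
  proof (rule sum.cong[OF refl], rule sum.cong[OF refl])
    fix c u assume c: "c \<in> {1..a}" and u: "u \<in> blk ms c"
    have cl: "c \<in> {1..l}" using c a by auto
    have "(\<Sum>kk<msum ms l. CDmat ms l R f x kk u * (\<Sum>j<msum ms l. L x kk j * rr j))
       = (\<Sum>v\<in>blk ms c. C v u * (\<Sum>j<msum ms l. L x v j * rr j))"
      unfolding coef_blk[OF cl u] C_def ..
    also have "\<dots> = (\<Sum>v\<in>blk ms c. C v u * (\<Sum>b\<in>{1..c}. \<Sum>s\<in>blk ms b. L x v s * rr s))"
      by (rule sum.cong[OF refl]) (simp add: Lsum_blk[OF cl _ L_lower])
    finally show "C r u * (\<Sum>kk<msum ms l. CDmat ms l R f x kk u * (\<Sum>j<msum ms l. L x kk j * rr j))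
      = C r u * (\<Sum>v\<in>blk ms c. C v u * (\<Sum>b\<in>{1..c}. \<Sum>s\<in>blk ms b. L x v s * rr s))" by simp
  qed
  also have "\<dots> = (\<Sum>c\<in>{1..a}. \<Sum>b\<in>{1..c}. H b c)"
  proof (rule sum.cong[OF refl])
    fix c
    have "(\<Sum>u\<in>blk ms c. C r u * (\<Sum>v\<in>blk ms c. C v u * (\<Sum>b\<in>{1..c}. \<Sum>s\<in>blk ms b. L x v s * rr s)))
       = (\<Sum>u\<in>blk ms c. \<Sum>v\<in>blk ms c. \<Sum>b\<in>{1..c}. \<Sum>s\<in>blk ms b. C r u * C v u * L x v s * rr s)"
      by (simp add: sum_distrib_left mult.assoc)
    also have "\<dots> = (\<Sum>u\<in>blk ms c. \<Sum>b\<in>{1..c}. \<Sum>v\<in>blk ms c. \<Sum>s\<in>blk ms b. C r u * C v u * L x v s * rr s)"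
      by (rule sum.cong[OF refl], rule sum.swap)
    also have "\<dots> = (\<Sum>b\<in>{1..c}. H b c)"
      unfolding H_def by (rule sum.swap)
    finally show "(\<Sum>u\<in>blk ms c. C r u * (\<Sum>v\<in>blk ms c. C v u * (\<Sum>b\<in>{1..c}. \<Sum>s\<in>blk ms b. L x v s * rr s)))
       = (\<Sum>b\<in>{1..c}. H b c)" .
  qed
  also have "\<dots> = (\<Sum>b\<in>{1..a}. \<Sum>c\<in>{b..a}. H b c)" by (rule swap_tri)
  also have "\<dots> = (\<Sum>b\<in>{1..a}. \<Sum>s\<in>blk ms b. Amat ms R f L x a b r s * rr s)"
  proof (rule sum.cong[OF refl])
    fix b
    have "(\<Sum>s\<in>blk ms b. Amat ms R f L x a b r s * rr s)
       = (\<Sum>s\<in>blk ms b. \<Sum>c\<in>{b..a}. \<Sum>u\<in>blk ms c. \<Sum>v\<in>blk ms c. C r u * C v u * L x v s * rr s)"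
      unfolding Amat_def C_def by (simp add: sum_distrib_right)
    also have "\<dots> = (\<Sum>c\<in>{b..a}. \<Sum>s\<in>blk ms b. \<Sum>u\<in>blk ms c. \<Sum>v\<in>blk ms c. C r u * C v u * L x v s * rr s)"
      by (rule sum.swap)
    also have "\<dots> = (\<Sum>c\<in>{b..a}. \<Sum>u\<in>blk ms c. \<Sum>s\<in>blk ms b. \<Sum>v\<in>blk ms c. C r u * C v u * L x v s * rr s)"
      by (rule sum.cong[OF refl], rule sum.swap)
    also have "\<dots> = (\<Sum>c\<in>{b..a}. H b c)"
      unfolding H_def by (rule sum.cong[OF refl], rule sum.cong[OF refl], rule sum.swap)
    finally show "(\<Sum>c\<in>{b..a}. H b c) = (\<Sum>s\<in>blk ms b. Amat ms R f L x a b r s * rr s)" by simp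
  qed
  finally show ?thesis unfolding rr_def .
qed

lemma fq_u:
  fixes L :: "real \<times> (real^'n) \<Rightarrow> nat \<Rightarrow> nat \<Rightarrow> real"
    and f :: "nat \<Rightarrow> real \<times> (real^'n) \<Rightarrow> real"
  assumes a: "a \<in> {1..l}" and r: "r \<in> blk ms a"
    and L_lower: "\<forall>x i j. i < msum ms l \<and> j < msum ms l \<and> blk_of ms l i < blk_of ms l j
                     \<longrightarrow> L x i j = 0"
  shows "pdot p r (fst x) - ft f x r - Fq f x r \<bullet> uctrl ms l k psi p f R L x
     = bvec ms k psi p f R L x a r - k a * psi a x * (\<Sum>s\<in>blk ms a. Amat ms R f L x a a r s * evec p f x s)"
proof -
  define A where "A b s = Amat ms R f L x a b s" for b s
  define Y1 where "Y1 b = (\<Sum>s\<in>blk ms b. Amat ms R f L x a b r s * (psi b x * pdot p s (fst x) - ft f x s))" for b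
  define Y2 where "Y2 b = k b * psi b x * (\<Sum>s\<in>blk ms b. Amat ms R f L x a b r s * evec p f x s)" for b
  have "(\<Sum>b\<in>{1..a}. \<Sum>s\<in>blk ms b. Amat ms R f L x a b r s * rvec' ms l k psi p f x s)
      = (\<Sum>b\<in>{1..a}. Y1 b + Y2 b)"
  proof (rule sum.cong[OF refl])
    fix b assume b: "b \<in> {1..a}"
    have bl: "b \<in> {1..l}" using a b by auto
    have "(\<Sum>s\<in>blk ms b. Amat ms R f L x a b r s * rvec' ms l k psi p f x s)
       = (\<Sum>s\<in>blk ms b. Amat ms R f L x a b r s * (psi b x * pdot p s (fst x) - ft f x s)
            + k b * psi b x * (Amat ms R f L x a b r s * evec p f x s))"
    proof (rule sum.cong[OF refl])
      fix s assume s: "s \<in> blk ms b"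
      have "blk_of ms l s = b" using blk_of_eq[OF bl s] .
      then show "Amat ms R f L x a b r s * rvec' ms l k psi p f x s
        = Amat ms R f L x a b r s * (psi b x * pdot p s (fst x) - ft f x s)
            + k b * psi b x * (Amat ms R f L x a b r s * evec p f x s)"
        unfolding rvec'_def rvec_def evec_def by (simp add: algebra_simps)
    qed
    also have "\<dots> = Y1 b + Y2 b"
      unfolding Y1_def Y2_def by (simp add: sum.distrib sum_distrib_left)
    finally show "(\<Sum>s\<in>blk ms b. Amat ms R f L x a b r s * rvec' ms l k psi p f x s) = Y1 b + Y2 b" .
  qed
  also have "\<dots> = (\<Sum>b\<in>{1..a}. Y1 b) + (\<Sum>b\<in>{1..<a}. Y2 b) + Y2 a"
  proof -
    have "{1..a} = insert a {1..<a}" using a by auto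
    then have "(\<Sum>b\<in>{1..a}. Y2 b) = Y2 a + (\<Sum>b\<in>{1..<a}. Y2 b)" by simp
    then show ?thesis by (simp add: sum.distrib)
  qed
  finally have E: "(\<Sum>b\<in>{1..a}. \<Sum>s\<in>blk ms b. Amat ms R f L x a b r s * rvec' ms l k psi p f x s)
     = (\<Sum>b\<in>{1..a}. Y1 b) + (\<Sum>b\<in>{1..<a}. Y2 b) + Y2 a" .
  show ?thesis
    unfolding fq_u_A[OF a r L_lower] E bvec_def Y1_def Y2_def by simp
qed




lemma e_deriv:
  fixes f :: "nat \<Rightarrow> real \<times> (real^'n) \<Rightarrow> real"
  assumes fd: "f r differentiable (at (t, q t))" and qd: "(q has_vector_derivative q') (at t)"
    and pd: "p r differentiable (at t)"
  shows "((\<lambda>s. evec p f (s, q s) r) has_real_derivative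
           (pdot p r t - ft f (t, q t) r - Fq f (t, q t) r \<bullet> q')) (at t)"
proof -
  define x where "x = (t, q t)"
  define FD where "FD = frechet_derivative (f r) (at x)"
  have fdw: "(f r has_derivative FD) (at x)"
    using fd frechet_derivative_works unfolding FD_def x_def by blast
  have lin: "linear FD" using has_derivative_linear[OF fdw] .
  have path: "((\<lambda>s. (s, q s)) has_derivative (\<lambda>h. (h, h *\<^sub>R q'))) (at t)"
    using has_derivative_Pair[OF has_derivative_ident qd[unfolded has_vector_derivative_def]] by simp
  have comp: "((f r \<circ> (\<lambda>s. (s, q s))) has_derivative (FD \<circ> (\<lambda>h. (h, h *\<^sub>R q')))) (at t)"
    by (rule diff_chain_at[OF path]) (use fdw x_def in simp)
  have v: "(0::real, q') = (\<Sum>j\<in>UNIV. (q' $ j) *\<^sub>R (0::real, axis j (1::real)))"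
  proof (rule prod_eqI)
    show "fst (0::real, q') = fst (\<Sum>j\<in>UNIV. (q' $ j) *\<^sub>R (0::real, axis j (1::real)))"
      by (simp add: fst_sum)
    have "q' = (\<Sum>j\<in>UNIV. (q' $ j) *\<^sub>R axis j (1::real))"
      using basis_expansion[of q'] by (simp add: scalar_mult_eq_scaleR)
    then show "snd (0::real, q') = snd (\<Sum>j\<in>UNIV. (q' $ j) *\<^sub>R (0::real, axis j (1::real)))"
      by (simp add: snd_sum)
  qed
  have D: "FD (1, q') = ft f x r + Fq f x r \<bullet> q'"
  proof -
    have "FD (1, q') = FD (1, 0) + FD (0, q')"
      using linear_add[OF lin, of "(1,0)" "(0,q')"] by simp
    also have "FD (0, q') = (\<Sum>j\<in>UNIV. FD ((q' $ j) *\<^sub>R (0::real, axis j (1::real))))"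
      by (subst v, rule linear_sum[OF lin])
    also have "\<dots> = (\<Sum>j\<in>UNIV. q' $ j * FD (0, axis j 1))"
      by (rule sum.cong[OF refl]) (simp only: linear_scale[OF lin] real_scaleR_def)
    also have "\<dots> = Fq f x r \<bullet> q'"
      unfolding Fq_def inner_vec_def FD_def by (simp add: mult.commute)
    finally show ?thesis unfolding ft_def FD_def by simp
  qed
  have "(FD \<circ> (\<lambda>h. (h, h *\<^sub>R q'))) = (\<lambda>h. (ft f x r + Fq f x r \<bullet> q') * h)"
  proof
    fix h :: real
    have "(h, h *\<^sub>R q') = h *\<^sub>R (1, q')" by simp
    then show "(FD \<circ> (\<lambda>h. (h, h *\<^sub>R q'))) h = (ft f x r + Fq f x r \<bullet> q') * h"
      using linear_scale[OF lin, of h "(1, q')"] D by (simp add: mult.commute)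
  qed
  with comp have F: "((\<lambda>s. f r (s, q s)) has_real_derivative (ft f x r + Fq f x r \<bullet> q')) (at t)"
    unfolding has_field_derivative_def o_def by simp
  have P: "(p r has_real_derivative pdot p r t) (at t)"
    using pd DERIV_deriv_iff_real_differentiable unfolding pdot_def by blast
  have "((\<lambda>s. p r s - f r (s, q s)) has_real_derivative (pdot p r t - (ft f x r + Fq f x r \<bullet> q'))) (at t)"
    by (rule DERIV_diff[OF P F])
  then show ?thesis unfolding evec_def x_def by (simp add: algebra_simps)
qed

lemma aux_inv: "inverse X / 2 * (2 * Y) = Y / (X::real)"
proof -
  have "inverse X / 2 * (2 * Y) = inverse X * Y" by simp
  also have "\<dots> = Y / X" by (simp add: field_class.field_divide_inverse mult.commute)
  finally show ?thesis .
qed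

lemma sqrt_sum_deriv:
  fixes g :: "nat \<Rightarrow> real \<Rightarrow> real"
  assumes I: "finite I" and d: "\<And>i. i \<in> I \<Longrightarrow> (g i has_real_derivative g' i) (at t)"
    and pos: "(\<Sum>i\<in>I. (g i t)^2) > 0"
  shows "((\<lambda>s. sqrt (\<Sum>i\<in>I. (g i s)^2)) has_real_derivative
            (\<Sum>i\<in>I. g i t * g' i) / sqrt (\<Sum>i\<in>I. (g i t)^2)) (at t)"
proof -
  have S: "((\<lambda>s. \<Sum>i\<in>I. (g i s)^2) has_real_derivative (\<Sum>i\<in>I. 2 * g i t * g' i)) (at t)"
  proof (rule DERIV_sum)
    fix i assume i: "i \<in> I"
    have e: "of_nat 2 * (g' i * (g i t)^(2 - Suc 0)) = 2 * g i t * g' i" by simp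
    show "((\<lambda>s. (g i s)^2) has_real_derivative 2 * g i t * g' i) (at t)"
      by (rule DERIV_cong[OF DERIV_power[OF d[OF i]] e])
  qed
  have D: "((\<lambda>s. sqrt (\<Sum>i\<in>I. (g i s)^2)) has_real_derivative
      inverse (sqrt (\<Sum>i\<in>I. (g i t)^2)) / 2 * (\<Sum>i\<in>I. 2 * g i t * g' i)) (at t)"
    by (rule DERIV_chain2[OF DERIV_real_sqrt[OF pos] S])
  have s2: "(\<Sum>i\<in>I. 2 * g i t * g' i) = 2 * (\<Sum>i\<in>I. g i t * g' i)"
    by (simp only: sum_distrib_left mult.assoc)
  have eq: "inverse (sqrt (\<Sum>i\<in>I. (g i t)^2)) / 2 * (\<Sum>i\<in>I. 2 * g i t * g' i)
     = (\<Sum>i\<in>I. g i t * g' i) / sqrt (\<Sum>i\<in>I. (g i t)^2)"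
    unfolding s2 by (rule aux_inv)
  show ?thesis using D unfolding eq .
qed

lemma sqrt_sum_deriv0:
  fixes g :: "nat \<Rightarrow> real \<Rightarrow> real"
  assumes I: "finite I" and d: "\<And>i. i \<in> I \<Longrightarrow> (g i has_real_derivative 0) (at t)"
    and z: "\<And>i. i \<in> I \<Longrightarrow> g i t = 0"
  shows "((\<lambda>s. sqrt (\<Sum>i\<in>I. (g i s)^2)) has_real_derivative 0) (at t)"
proof -
  have lim: "((\<lambda>y. \<Sum>i\<in>I. \<bar>(g i y - g i t) / (y - t)\<bar>) \<longlongrightarrow> (\<Sum>i\<in>I. \<bar>0::real\<bar>)) (at t)"
    by (intro tendsto_sum tendsto_rabs) (use d in \<open>auto simp: has_field_derivative_iff\<close>)
  have t0: "sqrt (\<Sum>i\<in>I. (g i t)^2) = 0" using z by simp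
  have "((\<lambda>y. (sqrt (\<Sum>i\<in>I. (g i y)^2) - sqrt (\<Sum>i\<in>I. (g i t)^2)) / (y - t)) \<longlongrightarrow> 0) (at t)"
  proof (rule Lim_null_comparison)
    show "((\<lambda>y. \<Sum>i\<in>I. \<bar>(g i y - g i t) / (y - t)\<bar>) \<longlongrightarrow> 0) (at t)" using lim by simp
    show "\<forall>\<^sub>F y in at t. norm ((sqrt (\<Sum>i\<in>I. (g i y)^2) - sqrt (\<Sum>i\<in>I. (g i t)^2)) / (y - t))
            \<le> (\<Sum>i\<in>I. \<bar>(g i y - g i t) / (y - t)\<bar>)"
    proof (rule always_eventually, rule allI)
      fix y
      have "sqrt (\<Sum>i\<in>I. (g i y)^2) = L2_set (\<lambda>i. g i y) I" by (simp add: L2_set_def)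
      also have "\<dots> \<le> (\<Sum>i\<in>I. \<bar>g i y\<bar>)" by (rule L2_set_le_sum_abs)
      finally have le: "sqrt (\<Sum>i\<in>I. (g i y)^2) \<le> (\<Sum>i\<in>I. \<bar>g i y\<bar>)" .
      have "norm ((sqrt (\<Sum>i\<in>I. (g i y)^2) - sqrt (\<Sum>i\<in>I. (g i t)^2)) / (y - t))
          = sqrt (\<Sum>i\<in>I. (g i y)^2) / \<bar>y - t\<bar>"
        using t0 by (simp add: abs_divide sum_nonneg)
      also have "\<dots> \<le> (\<Sum>i\<in>I. \<bar>g i y\<bar>) / \<bar>y - t\<bar>" using le by (simp add: divide_right_mono)
      also have "\<dots> = (\<Sum>i\<in>I. \<bar>(g i y - g i t) / (y - t)\<bar>)"
        using z by (simp add: sum_divide_distrib abs_divide)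
      finally show "norm ((sqrt (\<Sum>i\<in>I. (g i y)^2) - sqrt (\<Sum>i\<in>I. (g i t)^2)) / (y - t))
            \<le> (\<Sum>i\<in>I. \<bar>(g i y - g i t) / (y - t)\<bar>)" .
    qed
  qed
  then show ?thesis by (simp add: has_field_derivative_iff)
qed

lemma countable_isolated:
  fixes S :: "real set"
  assumes iso: "\<And>t. t \<in> S \<Longrightarrow> \<exists>d>0. \<forall>s\<in>S. s \<noteq> t \<longrightarrow> d \<le> \<bar>s - t\<bar>"
  shows "countable S"
proof -
  define d where "d t = (SOME d. d > 0 \<and> (\<forall>s\<in>S. s \<noteq> t \<longrightarrow> d \<le> \<bar>s - t\<bar>))" for t
  have d: "d t > 0 \<and> (\<forall>s\<in>S. s \<noteq> t \<longrightarrow> d t \<le> \<bar>s - t\<bar>)" if "t \<in> S" for t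
    unfolding d_def by (rule someI_ex) (use iso that in blast)
  define \<rho> where "\<rho> t = (SOME r. r \<in> \<rat> \<and> t < r \<and> r < t + d t)" for t
  have \<rho>: "\<rho> t \<in> \<rat> \<and> t < \<rho> t \<and> \<rho> t < t + d t" if "t \<in> S" for t
    unfolding \<rho>_def by (rule someI_ex) (use Rats_dense_in_real[of t "t + d t"] d[OF that] in auto)
  have inj: "inj_on \<rho> S"
  proof (rule inj_onI, rule ccontr)
    fix s t assume s: "s \<in> S" and t: "t \<in> S" and eq: "\<rho> s = \<rho> t" and ne: "s \<noteq> t"
    show False
    proof (cases "s < t")
      case True
      then show ?thesis using \<rho>[OF s] \<rho>[OF t] d[OF s] t ne eq by force
    next
      case False
      then have "t < s" using ne by simp
      then show ?thesis using \<rho>[OF s] \<rho>[OF t] d[OF t] s ne eq by force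
    qed
  qed
  have "\<rho> ` S \<subseteq> \<rat>" using \<rho> by auto
  then have "countable (\<rho> ` S)" using countable_rat countable_subset by blast
  then show ?thesis using countable_image_inj_on inj by blast
qed

lemma countable_bad:
  fixes g :: "real \<Rightarrow> real"
  shows "countable {t. g t = 0 \<and> (\<exists>D. D \<noteq> 0 \<and> (g has_real_derivative D) (at t))}"
proof (rule countable_isolated)
  fix t assume "t \<in> {t. g t = 0 \<and> (\<exists>D. D \<noteq> 0 \<and> (g has_real_derivative D) (at t))}"
  then obtain D where g0: "g t = 0" and D: "D \<noteq> 0" "(g has_real_derivative D) (at t)" by blast
  have "((\<lambda>y. (g y - g t) / (y - t)) \<longlongrightarrow> D) (at t)" using D by (simp add: has_field_derivative_iff)
  then have "eventually (\<lambda>y. (g y - g t) / (y - t) \<noteq> 0) (at t)"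
    using tendsto_imp_eventually_ne D by blast
  then obtain d where d: "d > 0" "\<And>y. y \<noteq> t \<Longrightarrow> dist y t < d \<Longrightarrow> (g y - g t) / (y - t) \<noteq> 0"
    unfolding eventually_at by auto
  show "\<exists>d>0. \<forall>s\<in>{t. g t = 0 \<and> (\<exists>D. D \<noteq> 0 \<and> (g has_real_derivative D) (at t))}. s \<noteq> t \<longrightarrow> d \<le> \<bar>s - t\<bar>"
  proof (intro exI conjI ballI impI)
    fix s assume s: "s \<in> {t. g t = 0 \<and> (\<exists>D. D \<noteq> 0 \<and> (g has_real_derivative D) (at t))}" "s \<noteq> t"
    show "d \<le> \<bar>s - t\<bar>"
    proof (rule ccontr)
      assume "\<not> d \<le> \<bar>s - t\<bar>"
      then have "dist s t < d" by (simp add: dist_real_def)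
      then show False using d(2)[OF s(2)] s(1) g0 by simp
    qed
  qed (use d in auto)
qed




lemma ac_E:
  assumes ac: "abs_cont_on g a b" and e: "e > 0"
  shows "\<exists>\<delta>>0. \<forall>(d::nat) (u::nat \<Rightarrow> real) (v::nat \<Rightarrow> real).
        (\<forall>j<d. a \<le> u j \<and> u j \<le> v j \<and> v j \<le> b) \<and>
        (\<forall>i<d. \<forall>j<d. i \<noteq> j \<longrightarrow> v i \<le> u j \<or> v j \<le> u i) \<and>
        (\<Sum>j<d. v j - u j) < \<delta>
        \<longrightarrow> (\<Sum>j<d. norm (g (v j) - g (u j))) < e"
proof -
  from ac have A: "\<forall>\<epsilon>>0. \<exists>\<delta>>0. \<forall>(d::nat) (u::nat \<Rightarrow> real) (v::nat \<Rightarrow> real).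
        (\<forall>j<d. a \<le> u j \<and> u j \<le> v j \<and> v j \<le> b) \<and>
        (\<forall>i<d. \<forall>j<d. i \<noteq> j \<longrightarrow> v i \<le> u j \<or> v j \<le> u i) \<and>
        (\<Sum>j<d. v j - u j) < \<delta>
        \<longrightarrow> (\<Sum>j<d. norm (g (v j) - g (u j))) < \<epsilon>" unfolding abs_cont_on_def .
  show ?thesis using mp[OF spec[OF A, of e] e] .
qed

lemma ac_sub:
  assumes ac: "abs_cont_on g a b" and ac1: "a \<le> c" and db: "d \<le> b"
  shows "abs_cont_on g c d"
  unfolding abs_cont_on_def
proof (intro allI impI)
  fix e :: real assume e: "e > 0"
  obtain \<delta> where dl: "\<delta> > 0" and H: "\<forall>(n::nat) (u::nat \<Rightarrow> real) (v::nat \<Rightarrow> real).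
        (\<forall>j<n. a \<le> u j \<and> u j \<le> v j \<and> v j \<le> b) \<and>
        (\<forall>i<n. \<forall>j<n. i \<noteq> j \<longrightarrow> v i \<le> u j \<or> v j \<le> u i) \<and>
        (\<Sum>j<n. v j - u j) < \<delta>
        \<longrightarrow> (\<Sum>j<n. norm (g (v j) - g (u j))) < e"
    using ac_E[OF ac e] by blast
  show "\<exists>\<delta>>0. \<forall>(n::nat) (u::nat \<Rightarrow> real) (v::nat \<Rightarrow> real).
        (\<forall>j<n. c \<le> u j \<and> u j \<le> v j \<and> v j \<le> d) \<and>
        (\<forall>i<n. \<forall>j<n. i \<noteq> j \<longrightarrow> v i \<le> u j \<or> v j \<le> u i) \<and>
        (\<Sum>j<n. v j - u j) < \<delta>
        \<longrightarrow> (\<Sum>j<n. norm (g (v j) - g (u j))) < e"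
  proof (intro exI[of _ \<delta>] conjI dl allI impI)
    fix n :: nat and u v :: "nat \<Rightarrow> real"
    assume h: "(\<forall>j<n. c \<le> u j \<and> u j \<le> v j \<and> v j \<le> d) \<and>
        (\<forall>i<n. \<forall>j<n. i \<noteq> j \<longrightarrow> v i \<le> u j \<or> v j \<le> u i) \<and> (\<Sum>j<n. v j - u j) < \<delta>"
    have "\<forall>j<n. a \<le> u j \<and> u j \<le> v j \<and> v j \<le> b"
    proof (intro allI impI)
      fix j assume "j < n"
      then have "c \<le> u j \<and> u j \<le> v j \<and> v j \<le> d" using h by blast
      then show "a \<le> u j \<and> u j \<le> v j \<and> v j \<le> b" using ac1 db by linarith
    qed
    then show "(\<Sum>j<n. norm (g (v j) - g (u j))) < e" using H[rule_format, of n u v] h by blast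
  qed
qed

lemma ac_cont:
  assumes ac: "abs_cont_on g a b"
  shows "continuous_on {a..b} g"
  unfolding continuous_on_iff
proof (intro ballI allI impI)
  fix x e :: real assume x: "x \<in> {a..b}" and e: "e > 0"
  obtain \<delta> where dl: "\<delta> > 0" and H: "\<forall>(n::nat) (u::nat \<Rightarrow> real) (v::nat \<Rightarrow> real).
        (\<forall>j<n. a \<le> u j \<and> u j \<le> v j \<and> v j \<le> b) \<and>
        (\<forall>i<n. \<forall>j<n. i \<noteq> j \<longrightarrow> v i \<le> u j \<or> v j \<le> u i) \<and>
        (\<Sum>j<n. v j - u j) < \<delta>
        \<longrightarrow> (\<Sum>j<n. norm (g (v j) - g (u j)) ) < e"
    using ac_E[OF ac e] by blast
  show "\<exists>d>0. \<forall>x'\<in>{a..b}. dist x' x < d \<longrightarrow> dist (g x') (g x) < e"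
  proof (intro exI[of _ \<delta>] conjI dl ballI impI)
    fix y assume y: "y \<in> {a..b}" and dy: "dist y x < \<delta>"
    have c1: "\<forall>j<(1::nat). a \<le> (\<lambda>_. min x y) j \<and> (\<lambda>_. min x y) j \<le> (\<lambda>_. max x y) j \<and> (\<lambda>_. max x y) j \<le> b"
      using x y by auto
    have c2: "\<forall>i<(1::nat). \<forall>j<1. i \<noteq> j \<longrightarrow> (\<lambda>_. max x y) i \<le> (\<lambda>_. min x y) j \<or> (\<lambda>_. max x y) j \<le> (\<lambda>_. min x y) i"
      by auto
    have c3: "(\<Sum>j<(1::nat). (\<lambda>_. max x y) j - (\<lambda>_. min x y) j) < \<delta>"
      using dy unfolding dist_real_def by (cases "x \<le> y") (simp_all add: max_def min_def abs_if card_lessThan)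
    have "(\<Sum>j<(1::nat). norm (g ((\<lambda>_. max x y) j) - g ((\<lambda>_. min x y) j))) < e"
      using H[rule_format, of 1 "\<lambda>_. min x y" "\<lambda>_. max x y"] c1 c2 c3 by blast
    then show "dist (g y) (g x) < e"
      by (cases "x \<le> y") (auto simp: dist_norm max_def min_def norm_minus_commute)
  qed
qed

lemma ac_pair:
  assumes ac: "abs_cont_on q a b"
  shows "abs_cont_on (\<lambda>t. (t, q t)) a b"
  unfolding abs_cont_on_def
proof (intro allI impI)
  fix e :: real assume e: "e > 0"
  have e2: "e / 2 > 0" using e by simp
  obtain \<delta> where dl: "\<delta> > 0" and H: "\<forall>(n::nat) (u::nat \<Rightarrow> real) (v::nat \<Rightarrow> real).
        (\<forall>j<n. a \<le> u j \<and> u j \<le> v j \<and> v j \<le> b) \<and>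
        (\<forall>i<n. \<forall>j<n. i \<noteq> j \<longrightarrow> v i \<le> u j \<or> v j \<le> u i) \<and>
        (\<Sum>j<n. v j - u j) < \<delta>
        \<longrightarrow> (\<Sum>j<n. norm (q (v j) - q (u j)) ) < e / 2"
    using ac_E[OF ac e2] by blast
  show "\<exists>\<delta>>0. \<forall>(n::nat) (u::nat \<Rightarrow> real) (v::nat \<Rightarrow> real).
        (\<forall>j<n. a \<le> u j \<and> u j \<le> v j \<and> v j \<le> b) \<and>
        (\<forall>i<n. \<forall>j<n. i \<noteq> j \<longrightarrow> v i \<le> u j \<or> v j \<le> u i) \<and> (\<Sum>j<n. v j - u j) < \<delta> \<longrightarrow>
        (\<Sum>j<n. norm ((v j, q (v j)) - (u j, q (u j)))) < e"
  proof (intro exI[of _ "min \<delta> (e/2)"] conjI allI impI)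
    show "min \<delta> (e/2) > 0" using dl e by simp
    fix n :: nat and u v :: "nat \<Rightarrow> real"
    assume h: "(\<forall>j<n. a \<le> u j \<and> u j \<le> v j \<and> v j \<le> b) \<and>
        (\<forall>i<n. \<forall>j<n. i \<noteq> j \<longrightarrow> v i \<le> u j \<or> v j \<le> u i) \<and> (\<Sum>j<n. v j - u j) < min \<delta> (e/2)"
    have "(\<Sum>j<n. norm ((v j, q (v j)) - (u j, q (u j)))) \<le> (\<Sum>j<n. (v j - u j) + norm (q (v j) - q (u j)))"
    proof (rule sum_mono)
      fix j assume j: "j \<in> {..<n}"
      have "norm ((v j, q (v j)) - (u j, q (u j))) = norm (v j - u j, q (v j) - q (u j))" by simp
      also have "\<dots> \<le> norm (v j - u j) + norm (q (v j) - q (u j))" by (rule norm_Pair_le)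
      also have "norm (v j - u j) = v j - u j" using h j by auto
      finally show "norm ((v j, q (v j)) - (u j, q (u j))) \<le> (v j - u j) + norm (q (v j) - q (u j))" .
    qed
    also have "\<dots> = (\<Sum>j<n. v j - u j) + (\<Sum>j<n. norm (q (v j) - q (u j)))" by (rule sum.distrib)
    also have "\<dots> < e/2 + e/2"
    proof (rule add_less_le_mono)
      show "(\<Sum>j<n. v j - u j) < e/2" using h by simp
      have "(\<Sum>j<n. v j - u j) < \<delta>" using h by simp
      then show "(\<Sum>j<n. norm (q (v j) - q (u j))) \<le> e/2"
        using H[rule_format, of n u v] h by auto
    qed
    finally show "(\<Sum>j<n. norm ((v j, q (v j)) - (u j, q (u j)))) < e" by simp
  qed
qed

lemma ac_lip:
  fixes g :: "real \<Rightarrow> 'a::real_normed_vector" and h :: "'a \<Rightarrow> real"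
  assumes ac: "abs_cont_on g a b" and S: "\<And>t. t \<in> {a..b} \<Longrightarrow> g t \<in> S"
    and lip: "\<And>x y. x \<in> S \<Longrightarrow> y \<in> S \<Longrightarrow> \<bar>h x - h y\<bar> \<le> K * norm (x - y)"
  shows "abs_cont_on (\<lambda>t. h (g t)) a b"
  unfolding abs_cont_on_def
proof (intro allI impI)
  fix e :: real assume e: "e > 0"
  define K' where "K' = \<bar>K\<bar> + 1"
  have K': "K' > 0" "K \<le> K'" unfolding K'_def by auto
  have eK: "e / K' > 0" using e K' by simp
  obtain \<delta> where dl: "\<delta> > 0" and H: "\<forall>(n::nat) (u::nat \<Rightarrow> real) (v::nat \<Rightarrow> real).
        (\<forall>j<n. a \<le> u j \<and> u j \<le> v j \<and> v j \<le> b) \<and>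
        (\<forall>i<n. \<forall>j<n. i \<noteq> j \<longrightarrow> v i \<le> u j \<or> v j \<le> u i) \<and>
        (\<Sum>j<n. v j - u j) < \<delta>
        \<longrightarrow> (\<Sum>j<n. norm (g (v j) - g (u j)) ) < e / K'"
    using ac_E[OF ac eK] by blast
  show "\<exists>\<delta>>0. \<forall>(n::nat) (u::nat \<Rightarrow> real) (v::nat \<Rightarrow> real).
        (\<forall>j<n. a \<le> u j \<and> u j \<le> v j \<and> v j \<le> b) \<and>
        (\<forall>i<n. \<forall>j<n. i \<noteq> j \<longrightarrow> v i \<le> u j \<or> v j \<le> u i) \<and> (\<Sum>j<n. v j - u j) < \<delta> \<longrightarrow>
        (\<Sum>j<n. norm (h (g (v j)) - h (g (u j)))) < e"
  proof (intro exI[of _ \<delta>] conjI dl allI impI)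
    fix n :: nat and u v :: "nat \<Rightarrow> real"
    assume hh: "(\<forall>j<n. a \<le> u j \<and> u j \<le> v j \<and> v j \<le> b) \<and>
        (\<forall>i<n. \<forall>j<n. i \<noteq> j \<longrightarrow> v i \<le> u j \<or> v j \<le> u i) \<and> (\<Sum>j<n. v j - u j) < \<delta>"
    have "(\<Sum>j<n. norm (h (g (v j)) - h (g (u j)))) \<le> (\<Sum>j<n. K' * norm (g (v j) - g (u j)))"
    proof (rule sum_mono)
      fix j assume j: "j \<in> {..<n}"
      have uv: "u j \<in> {a..b}" "v j \<in> {a..b}" using hh j by auto
      have "norm (h (g (v j)) - h (g (u j))) \<le> K * norm (g (v j) - g (u j))"
        using lip[OF S[OF uv(2)] S[OF uv(1)]] by simp
      also have "\<dots> \<le> K' * norm (g (v j) - g (u j))" using K' by (simp add: mult_right_mono)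
      finally show "norm (h (g (v j)) - h (g (u j))) \<le> K' * norm (g (v j) - g (u j))" .
    qed
    also have "\<dots> = K' * (\<Sum>j<n. norm (g (v j) - g (u j)))" by (simp add: sum_distrib_left)
    also have "\<dots> < K' * (e / K')"
    proof (rule mult_strict_left_mono)
      show "(\<Sum>j<n. norm (g (v j) - g (u j))) < e / K'" using H[rule_format, of n u v] hh by blast
    qed (use K' in simp)
    also have "\<dots> = e" using K' by simp
    finally show "(\<Sum>j<n. norm (h (g (v j)) - h (g (u j)))) < e" .
  qed
qed

lemma L2_diff_le: "\<bar>L2_set u A - L2_set v A\<bar> \<le> (\<Sum>i\<in>A. \<bar>u i - v i\<bar>)"
proof -
  have 1: "L2_set u A \<le> L2_set (\<lambda>i. u i - v i) A + L2_set v A"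
    using L2_set_triangle_ineq[of "\<lambda>i. u i - v i" v A] by simp
  have 2: "L2_set v A \<le> L2_set (\<lambda>i. v i - u i) A + L2_set u A"
    using L2_set_triangle_ineq[of "\<lambda>i. v i - u i" u A] by simp
  have 3: "L2_set (\<lambda>i. v i - u i) A = L2_set (\<lambda>i. u i - v i) A"
    unfolding L2_set_def by (simp add: power2_commute)
  have "\<bar>L2_set u A - L2_set v A\<bar> \<le> L2_set (\<lambda>i. u i - v i) A" using 1 2 3 by linarith
  also have "\<dots> \<le> (\<Sum>i\<in>A. \<bar>u i - v i\<bar>)" by (rule L2_set_le_sum_abs)
  finally show ?thesis .
qed

lemma lip_C1:
  fixes F :: "real \<times> (real^'n) \<Rightarrow> real"
  assumes K: "convex K" "compact K"
    and d: "\<And>x. F differentiable (at x)"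
    and c1: "continuous_on UNIV (\<lambda>x. frechet_derivative F (at x) (1, 0))"
    and c2: "\<And>j. continuous_on UNIV (\<lambda>x. frechet_derivative F (at x) (0, axis j 1))"
  shows "\<exists>B. \<forall>x\<in>K. \<forall>y\<in>K. \<bar>F x - F y\<bar> \<le> B * norm (x - y)"
proof -
  define G where "G x = (\<chi> j. frechet_derivative F (at x) (0, axis j 1))" for x :: "real \<times> (real^'n)"
  define N where "N x = \<bar>frechet_derivative F (at x) (1, 0)\<bar> + norm (G x)" for x
  have cG: "continuous_on UNIV G" unfolding G_def by (intro continuous_on_vec_lambda c2)
  have cN: "continuous_on K N" unfolding N_def
    by (intro continuous_intros continuous_on_subset[OF c1] continuous_on_subset[OF cG]) auto
  obtain B where B: "\<And>x. x \<in> K \<Longrightarrow> N x \<le> B"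
    using compact_imp_bounded[OF compact_continuous_image[OF cN K(2)]]
    by (auto simp: bounded_real) (metis abs_le_D1)
  have bnd: "\<bar>frechet_derivative F (at x) h\<bar> \<le> N x * norm h" for x h
  proof -
    define FD where "FD = frechet_derivative F (at x)"
    have lin: "linear FD" using d frechet_derivative_works has_derivative_linear unfolding FD_def by blast
    obtain h0 hv where hh: "h = (h0, hv)" by (cases h)
    have v: "(0::real, hv) = (\<Sum>j\<in>UNIV. (hv $ j) *\<^sub>R (0::real, axis j (1::real)))"
    proof (rule prod_eqI)
      show "fst (0::real, hv) = fst (\<Sum>j\<in>UNIV. (hv $ j) *\<^sub>R (0::real, axis j (1::real)))"
        by (simp add: fst_sum)
      have "hv = (\<Sum>j\<in>UNIV. (hv $ j) *\<^sub>R axis j (1::real))"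
        using basis_expansion[of hv] by (simp add: scalar_mult_eq_scaleR)
      then show "snd (0::real, hv) = snd (\<Sum>j\<in>UNIV. (hv $ j) *\<^sub>R (0::real, axis j (1::real)))"
        by (simp add: snd_sum)
    qed
    have "FD h = FD (h0 *\<^sub>R (1, 0)) + FD (0, hv)"
      using linear_add[OF lin, of "h0 *\<^sub>R (1,0)" "(0,hv)"] hh by simp
    also have "FD (h0 *\<^sub>R (1, 0)) = h0 * FD (1, 0)" by (simp only: linear_scale[OF lin] real_scaleR_def)
    also have "FD (0, hv) = (\<Sum>j\<in>UNIV. FD ((hv $ j) *\<^sub>R (0::real, axis j (1::real))))"
      by (subst v, rule linear_sum[OF lin])
    also have "\<dots> = (\<Sum>j\<in>UNIV. hv $ j * FD (0, axis j 1))"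
      by (rule sum.cong[OF refl]) (simp only: linear_scale[OF lin] real_scaleR_def)
    also have "\<dots> = G x \<bullet> hv" unfolding G_def inner_vec_def FD_def by (simp add: mult.commute)
    finally have eq: "FD h = h0 * FD (1, 0) + G x \<bullet> hv" .
    have "\<bar>FD h\<bar> \<le> \<bar>h0\<bar> * \<bar>FD (1, 0)\<bar> + norm (G x) * norm hv"
      unfolding eq by (rule order_trans[OF abs_triangle_ineq]) (simp add: abs_mult Cauchy_Schwarz_ineq2)
    also have "\<dots> \<le> norm h * \<bar>FD (1, 0)\<bar> + norm (G x) * norm h"
      using hh by (intro add_mono mult_right_mono mult_left_mono)
        (auto simp: norm_Pair intro: real_sqrt_ge_abs1 order_trans[OF _ real_sqrt_sum_squares_ge2])
    also have "\<dots> = N x * norm h" unfolding N_def FD_def by (simp add: algebra_simps)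
    finally show ?thesis unfolding FD_def .
  qed
  have "\<bar>F x - F y\<bar> \<le> B * norm (x - y)" if x: "x \<in> K" and y: "y \<in> K" for x y
  proof -
    have "norm (F x - F y) \<le> B * norm (x - y)"
    proof (rule differentiable_bound[OF K(1) _ _ x y])
      fix z assume "z \<in> K"
      show "(F has_derivative frechet_derivative F (at z)) (at z within K)"
        using d frechet_derivative_works has_derivative_at_withinI by blast
      show "onorm (frechet_derivative F (at z)) \<le> B"
      proof (rule onorm_le)
        fix h
        have "norm (frechet_derivative F (at z) h) \<le> N z * norm h" using bnd by simp
        also have "\<dots> \<le> B * norm h" using B[OF \<open>z \<in> K\<close>] by (simp add: mult_right_mono)
        finally show "norm (frechet_derivative F (at z) h) \<le> B * norm h" .
      qed
    qed
    then show ?thesis by simp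
  qed
  then show ?thesis by blast
qed

lemma lip_p:
  fixes P :: "real \<Rightarrow> real"
  assumes d: "\<And>t. P differentiable (at t)" and c: "continuous_on UNIV (deriv P)"
  shows "\<exists>B. \<forall>x\<in>{a..b}. \<forall>y\<in>{a..b}. \<bar>P x - P y\<bar> \<le> B * \<bar>x - y\<bar>"
proof -
  have cc: "continuous_on {a..b} (\<lambda>t. \<bar>deriv P t\<bar>)" by (intro continuous_intros continuous_on_subset[OF c]) auto
  have "bounded ((\<lambda>t. \<bar>deriv P t\<bar>) ` {a..b})"
    using compact_imp_bounded[OF compact_continuous_image[OF cc compact_Icc]] .
  then obtain B where B0: "\<forall>x\<in>{a..b}. \<bar>\<bar>deriv P x\<bar>\<bar> \<le> B" unfolding bounded_real by auto
  have B: "\<And>x. x \<in> {a..b} \<Longrightarrow> \<bar>deriv P x\<bar> \<le> B" using B0 by simp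
  have "norm (P x - P y) \<le> B * norm (x - y)" if "x \<in> {a..b}" "y \<in> {a..b}" for x y
  proof (rule differentiable_bound[OF convex_real_interval(5) _ _ that])
    fix z assume z: "z \<in> {a..b}"
    have "(P has_real_derivative deriv P z) (at z)" using d DERIV_deriv_iff_real_differentiable by blast
    then have "(P has_derivative (*) (deriv P z)) (at z)" by (simp add: has_field_derivative_def)
    moreover have "(*) (deriv P z) = (\<lambda>h. h * deriv P z)" by (rule ext) (simp add: mult.commute)
    ultimately show "(P has_derivative (\<lambda>h. h * deriv P z)) (at z within {a..b})"
      using has_derivative_at_withinI by metis
    show "onorm (\<lambda>h. h * deriv P z) \<le> B"
    proof (rule onorm_le)
      fix h :: real
      show "norm (h * deriv P z) \<le> B * norm h"
        using mult_left_mono[OF B[OF z] abs_ge_zero[of h]] by (simp add: abs_mult mult.commute)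
    qed
  qed
  then have "\<forall>x\<in>{a..b}. \<forall>y\<in>{a..b}. \<bar>P x - P y\<bar> \<le> B * \<bar>x - y\<bar>" by simp
  then show ?thesis by blast
qed





definition good :: "real measure \<Rightarrow> real set \<Rightarrow> (real \<Rightarrow> real) \<Rightarrow> bool" where
  "good M S g \<longleftrightarrow> g \<in> borel_measurable M \<and> (\<exists>B. \<forall>t\<in>S. \<bar>g t\<bar> \<le> B)"

lemma good_const: "good M S (\<lambda>t. c)"
  unfolding good_def by auto

lemma good_add: "good M S f \<Longrightarrow> good M S g \<Longrightarrow> good M S (\<lambda>t. f t + g t)"
  unfolding good_def
proof (elim conjE exE, intro conjI)
  fix B1 B2 assume "f \<in> borel_measurable M" "g \<in> borel_measurable M"
  then show "(\<lambda>t. f t + g t) \<in> borel_measurable M" by simp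
  assume "\<forall>t\<in>S. \<bar>f t\<bar> \<le> B1" "\<forall>t\<in>S. \<bar>g t\<bar> \<le> B2"
  then have "\<forall>t\<in>S. \<bar>f t + g t\<bar> \<le> B1 + B2"
    by (metis abs_triangle_ineq add_mono order_trans)
  then show "\<exists>B. \<forall>t\<in>S. \<bar>f t + g t\<bar> \<le> B" ..
qed

lemma good_minus: "good M S f \<Longrightarrow> good M S (\<lambda>t. - f t)"
  unfolding good_def by auto

lemma good_diff: "good M S f \<Longrightarrow> good M S g \<Longrightarrow> good M S (\<lambda>t. f t - g t)"
  using good_add[of M S f "\<lambda>t. - g t"] good_minus[of M S g] by simp

lemma good_mult: "good M S f \<Longrightarrow> good M S g \<Longrightarrow> good M S (\<lambda>t. f t * g t)"
  unfolding good_def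
proof (elim conjE exE, intro conjI)
  fix B1 B2 assume "f \<in> borel_measurable M" "g \<in> borel_measurable M"
  then show "(\<lambda>t. f t * g t) \<in> borel_measurable M" by simp
  assume b1: "\<forall>t\<in>S. \<bar>f t\<bar> \<le> B1" and b2: "\<forall>t\<in>S. \<bar>g t\<bar> \<le> B2"
  have "\<bar>f t * g t\<bar> \<le> B1 * B2" if t: "t \<in> S" for t
  proof -
    have "\<bar>f t * g t\<bar> = \<bar>f t\<bar> * \<bar>g t\<bar>" by (simp add: abs_mult)
    also have "\<dots> \<le> B1 * B2"
      by (rule mult_mono) (use b1 b2 t in \<open>auto intro: order_trans[OF abs_ge_zero]\<close>)
    finally show ?thesis .
  qed
  then show "\<exists>B. \<forall>t\<in>S. \<bar>f t * g t\<bar> \<le> B" by blast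
qed

lemma good_abs: "good M S f \<Longrightarrow> good M S (\<lambda>t. \<bar>f t\<bar>)"
  unfolding good_def by auto

lemma good_sum:
  assumes "finite I" "\<And>i. i \<in> I \<Longrightarrow> good M S (g i)"
  shows "good M S (\<lambda>t. \<Sum>i\<in>I. g i t)"
  using assms
proof (induction I rule: finite_induct)
  case empty then show ?case by (simp add: good_const)
next
  case (insert x F)
  then have "good M S (\<lambda>t. g x t + (\<Sum>i\<in>F. g i t))" by (intro good_add) auto
  then show ?case using insert by simp
qed

lemma good_sqrt: "good M S f \<Longrightarrow> good M S (\<lambda>t. sqrt (f t))"
  unfolding good_def
proof (elim conjE exE, intro conjI)
  fix B assume m: "f \<in> borel_measurable M"
  show "(\<lambda>t. sqrt (f t)) \<in> borel_measurable M"
    using measurable_compose[OF m borel_measurable_sqrt] by (simp add: o_def)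
  assume b: "\<forall>t\<in>S. \<bar>f t\<bar> \<le> B"
  have "\<bar>sqrt (f t)\<bar> \<le> sqrt B" if "t \<in> S" for t
  proof -
    have "\<bar>sqrt (f t)\<bar> = sqrt \<bar>f t\<bar>"
      by (cases "f t \<ge> 0") (simp_all add: real_sqrt_minus[symmetric])
    also have "\<dots> \<le> sqrt B" using b that by simp
    finally show ?thesis .
  qed
  then show "\<exists>B. \<forall>t\<in>S. \<bar>sqrt (f t)\<bar> \<le> B" by blast
qed

lemma good_dom:
  assumes "good M S g" "h \<in> borel_measurable M" "\<And>t. t \<in> S \<Longrightarrow> \<bar>h t\<bar> \<le> \<bar>g t\<bar>"
  shows "good M S h"
  using assms unfolding good_def by (meson order_trans)

lemma good_int:
  assumes "good (restrict_space lborel {a..b}) {a..b} g"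
  shows "set_integrable lborel {a..b} g"
proof -
  obtain B where m: "g \<in> borel_measurable (restrict_space lborel {a..b})" and B: "\<forall>t\<in>{a..b}. \<bar>g t\<bar> \<le> B"
    using assms unfolding good_def by blast
  have sp: "space (restrict_space lborel {a..b}) = {a..b}" by (simp add: space_restrict_space)
  have "integrable (restrict_space lborel {a..b}) g"
  proof (rule integrableI_bounded_set[where A="{a..b}" and B=B])
    show "{a..b} \<in> sets (restrict_space lborel {a..b})"
      by (metis sets.top sp)
    show "g \<in> borel_measurable (restrict_space lborel {a..b})" by (rule m)
    show "emeasure (restrict_space lborel {a..b}) {a..b} < \<infinity>"
      by (subst emeasure_restrict_space) (auto, cases "a \<le> b", auto)
    show "AE x in restrict_space lborel {a..b}. x \<in> {a..b} \<longrightarrow> norm (g x) \<le> B"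
      using B by auto
    show "AE x in restrict_space lborel {a..b}. x \<notin> {a..b} \<longrightarrow> g x = 0"
      by (rule AE_I2) (simp add: sp)
  qed
  then show ?thesis by (subst set_integrable_eq) auto
qed

lemma meas_cont:
  assumes "continuous_on S g"
  shows "g \<in> borel_measurable (restrict_space lborel S)"
proof -
  have "g \<in> borel_measurable (restrict_space borel S)"
    by (rule borel_measurable_continuous_on_restrict[OF assms])
  moreover have "sets (restrict_space lborel S) = sets (restrict_space borel S)"
    by (rule sets_restrict_space_cong) simp
  ultimately show ?thesis using measurable_cong_sets by blast
qed

lemma good_cont:
  assumes "continuous_on {a..b} g"
  shows "good (restrict_space lborel {a..b}) {a..b} g"
proof -
  have "bounded (g ` {a..b})"
    using compact_imp_bounded[OF compact_continuous_image[OF assms compact_Icc]] .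
  then obtain B where "\<forall>x\<in>{a..b}. \<bar>g x\<bar> \<le> B" unfolding bounded_real by auto
  then show ?thesis unfolding good_def using meas_cont[OF assms] by blast
qed

lemma meas_sub:
  fixes g :: "real \<Rightarrow> real"
  assumes "set_borel_measurable lborel {t0..} g" "S \<subseteq> {t0..}"
  shows "g \<in> borel_measurable (restrict_space lborel S)"
proof -
  have "g \<in> borel_measurable (restrict_space lborel {t0..})"
    using assms(1) unfolding set_borel_measurable_def
    by (rule borel_measurable_restrict_space_iff[THEN iffD2, rotated]) auto
  then show ?thesis by (rule measurable_restrict_mono) (rule assms(2))
qed




lemma pinv_inv: "pinv y = inverse y"
  by (simp add: pinv_def divide_inverse)

lemma meas_pinv: "g \<in> borel_measurable M \<Longrightarrow> (\<lambda>t. pinv (g t)) \<in> borel_measurable M"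
  unfolding pinv_inv by (rule borel_measurable_inverse)

lemma good_meas: "good M S g \<Longrightarrow> g \<in> borel_measurable M"
  unfolding good_def by blast

lemma good_sq: "good M S f \<Longrightarrow> good M S (\<lambda>t. (f t)^2)"
  using good_mult[of M S f f] by (simp add: power2_eq_square)

lemma e_le_phi:
  assumes "finite I" "r \<in> I"
  shows "\<bar>e r\<bar> \<le> sqrt (\<Sum>i\<in>I. (e i)^2)"
proof -
  have "(e r)^2 \<le> (\<Sum>i\<in>I. (e i)^2)" by (rule member_le_sum) (use assms in auto)
  then have "sqrt ((e r)^2) \<le> sqrt (\<Sum>i\<in>I. (e i)^2)" by (rule real_sqrt_le_mono)
  then show ?thesis by simp
qed

lemma quad_bound:
  fixes e :: "nat \<Rightarrow> real"
  assumes I: "finite I"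
  shows "(pinv (sqrt (\<Sum>i\<in>I. (e i)^2)))^2 * \<bar>\<Sum>r\<in>I. e r * (\<Sum>s\<in>I. A r s * e s)\<bar>
     \<le> (\<Sum>r\<in>I. \<Sum>s\<in>I. \<bar>A r s\<bar>)"
proof -
  define \<phi> where "\<phi> = sqrt (\<Sum>i\<in>I. (e i)^2)"
  have eb: "\<bar>e r\<bar> \<le> \<phi>" if "r \<in> I" for r unfolding \<phi>_def by (rule e_le_phi[OF I that])
  have pos: "0 \<le> (\<Sum>r\<in>I. \<Sum>s\<in>I. \<bar>A r s\<bar>)" by (intro sum_nonneg) auto
  have Q: "\<bar>\<Sum>r\<in>I. e r * (\<Sum>s\<in>I. A r s * e s)\<bar> \<le> \<phi>^2 * (\<Sum>r\<in>I. \<Sum>s\<in>I. \<bar>A r s\<bar>)"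
  proof -
    have "\<bar>\<Sum>r\<in>I. e r * (\<Sum>s\<in>I. A r s * e s)\<bar> \<le> (\<Sum>r\<in>I. \<bar>e r * (\<Sum>s\<in>I. A r s * e s)\<bar>)"
      by (rule sum_abs)
    also have "\<dots> \<le> (\<Sum>r\<in>I. \<phi> * (\<Sum>s\<in>I. \<bar>A r s\<bar> * \<phi>))"
    proof (rule sum_mono)
      fix r assume r: "r \<in> I"
      have "\<bar>\<Sum>s\<in>I. A r s * e s\<bar> \<le> (\<Sum>s\<in>I. \<bar>A r s * e s\<bar>)" by (rule sum_abs)
      also have "\<dots> \<le> (\<Sum>s\<in>I. \<bar>A r s\<bar> * \<phi>)"
        by (rule sum_mono) (simp add: abs_mult eb mult_left_mono)
      finally have 1: "\<bar>\<Sum>s\<in>I. A r s * e s\<bar> \<le> (\<Sum>s\<in>I. \<bar>A r s\<bar> * \<phi>)" .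
      have "\<bar>e r * (\<Sum>s\<in>I. A r s * e s)\<bar> = \<bar>e r\<bar> * \<bar>\<Sum>s\<in>I. A r s * e s\<bar>" by (simp add: abs_mult)
      also have "\<dots> \<le> \<phi> * (\<Sum>s\<in>I. \<bar>A r s\<bar> * \<phi>)"
        by (rule mult_mono[OF eb[OF r] 1]) (use eb[OF r] in auto)
      finally show "\<bar>e r * (\<Sum>s\<in>I. A r s * e s)\<bar> \<le> \<phi> * (\<Sum>s\<in>I. \<bar>A r s\<bar> * \<phi>)" .
    qed
    also have "\<dots> = \<phi>^2 * (\<Sum>r\<in>I. \<Sum>s\<in>I. \<bar>A r s\<bar>)"
      by (simp add: sum_distrib_left sum_distrib_right power2_eq_square mult_ac)
    finally show ?thesis .
  qed
  show ?thesis
  proof (cases "\<phi> = 0")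
    case True then show ?thesis using pos unfolding \<phi>_def[symmetric] by (simp add: pinv_def)
  next
    case False
    have "(pinv \<phi>)^2 * \<bar>\<Sum>r\<in>I. e r * (\<Sum>s\<in>I. A r s * e s)\<bar> \<le> (pinv \<phi>)^2 * (\<phi>^2 * (\<Sum>r\<in>I. \<Sum>s\<in>I. \<bar>A r s\<bar>))"
      by (rule mult_left_mono[OF Q]) simp
    also have "\<dots> = (\<Sum>r\<in>I. \<Sum>s\<in>I. \<bar>A r s\<bar>)" using False by (simp add: pinv_def power2_eq_square)
    finally show ?thesis unfolding \<phi>_def .
  qed
qed

lemma lin_bound:
  fixes e :: "nat \<Rightarrow> real"
  assumes I: "finite I"
  shows "\<bar>pinv (sqrt (\<Sum>i\<in>I. (e i)^2)) * (\<Sum>r\<in>I. e r * b r)\<bar> \<le> (\<Sum>r\<in>I. \<bar>b r\<bar>)"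
proof -
  define \<phi> where "\<phi> = sqrt (\<Sum>i\<in>I. (e i)^2)"
  have eb: "\<bar>e r\<bar> \<le> \<phi>" if "r \<in> I" for r unfolding \<phi>_def by (rule e_le_phi[OF I that])
  have pos: "0 \<le> (\<Sum>r\<in>I. \<bar>b r\<bar>)" by (intro sum_nonneg) auto
  have Q: "\<bar>\<Sum>r\<in>I. e r * b r\<bar> \<le> \<phi> * (\<Sum>r\<in>I. \<bar>b r\<bar>)"
  proof -
    have "\<bar>\<Sum>r\<in>I. e r * b r\<bar> \<le> (\<Sum>r\<in>I. \<bar>e r * b r\<bar>)" by (rule sum_abs)
    also have "\<dots> \<le> (\<Sum>r\<in>I. \<phi> * \<bar>b r\<bar>)"
      by (rule sum_mono) (simp add: abs_mult eb mult_right_mono)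
    also have "\<dots> = \<phi> * (\<Sum>r\<in>I. \<bar>b r\<bar>)" by (simp add: sum_distrib_left)
    finally show ?thesis .
  qed
  show ?thesis
  proof (cases "\<phi> = 0")
    case True then show ?thesis using pos unfolding \<phi>_def[symmetric] by (simp add: pinv_def)
  next
    case False
    then have ph: "\<phi> > 0" unfolding \<phi>_def by (simp add: sum_nonneg order_le_neq_trans)
    have "\<bar>pinv \<phi> * (\<Sum>r\<in>I. e r * b r)\<bar> = (1 / \<phi>) * \<bar>\<Sum>r\<in>I. e r * b r\<bar>"
      using ph by (simp add: pinv_def abs_mult)
    also have "\<dots> \<le> (1 / \<phi>) * (\<phi> * (\<Sum>r\<in>I. \<bar>b r\<bar>))" by (rule mult_left_mono[OF Q]) (use ph in simp)
    also have "\<dots> = (\<Sum>r\<in>I. \<bar>b r\<bar>)" using ph by simp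
    finally show ?thesis unfolding \<phi>_def .
  qed
qed




theorem lemma18:
  fixes l :: nat and ms :: "nat \<Rightarrow> nat" and k :: "nat \<Rightarrow> real"
    and psi :: "nat \<Rightarrow> real \<times> (real^'n) \<Rightarrow> real"
    and p :: "nat \<Rightarrow> real \<Rightarrow> real"
    and f :: "nat \<Rightarrow> real \<times> (real^'n) \<Rightarrow> real"
    and R :: "real \<times> (real^'n) \<Rightarrow> real^'n^'n"
    and L :: "real \<times> (real^'n) \<Rightarrow> nat \<Rightarrow> nat \<Rightarrow> real"
    and q :: "real \<Rightarrow> real^'n" and t0 :: real
  assumes l2: "l \<ge> 2"
    and ms_pos: "\<forall>a\<in>{1..l}. ms a \<ge> 1"
    and m_le_n: "msum ms l \<le> CARD('n)"
    and f_diff: "\<forall>i<msum ms l. \<forall>x. f i differentiable (at x)"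
    and Df_cont: "\<forall>i<msum ms l. continuous_on UNIV (\<lambda>x. ft f x i)
                     \<and> (\<forall>j. continuous_on UNIV (\<lambda>x. Fq f x i $ j))"
    and R_inv: "\<forall>x. invertible (R x)"
    and R_cont: "continuous_on UNIV R"
    and p_diff: "\<forall>i<msum ms l. \<forall>t. p i differentiable (at t)"
    and pdot_cont: "\<forall>i<msum ms l. continuous_on UNIV (pdot p i)"
    and k_pos: "\<forall>a\<in>{1..l}. k a > 0"
    and psi_range: "\<forall>a\<in>{1..l}. \<forall>x. 0 \<le> psi a x \<and> psi a x \<le> 1"
    and psi_cont: "\<forall>a\<in>{1..l}. continuous_on UNIV (psi a)"
    and L_lower: "\<forall>x i j. i < msum ms l \<and> j < msum ms l \<and> blk_of ms l i < blk_of ms l j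
                     \<longrightarrow> L x i j = 0"
    and q_ac: "\<forall>T\<ge>t0. abs_cont_on q t0 T"
    and q_ode: "AE t in lborel. t \<ge> t0 \<longrightarrow>
                  (q has_vector_derivative uctrl ms l k psi p f R L (t, q t)) (at t)"
    and A1_bdd: "\<exists>B. \<forall>x. \<forall>i<msum ms l. \<forall>j<msum ms l. \<bar>Cmat R f x i j\<bar> \<le> B"
    and A1_meas: "\<forall>i<msum ms l. \<forall>j<msum ms l.
                    set_borel_measurable lborel {t0..} (\<lambda>t. Cmat R f (t, q t) i j)"
    and A2_bdd: "\<exists>B. \<forall>x. \<forall>i<msum ms l. \<forall>j<msum ms l. \<bar>L x i j\<bar> \<le> B"
    and A2_meas: "\<forall>i<msum ms l. \<forall>j<msum ms l.
                    set_borel_measurable lborel {t0..} (\<lambda>t. L (t, q t) i j)"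
  shows "\<forall>a\<in>{1..l}. \<forall>t1 t2. t0 \<le> t1 \<and> t1 < t2 \<longrightarrow>
           abs_cont_on (phi_a ms p f q a) t1 t2
         \<and> (AE t in lborel. t \<in> {t1..t2} \<longrightarrow>
              (phi_a ms p f q a has_real_derivative
                 (- rho_a ms k psi p f R L q a t * phi_a ms p f q a t
                  + gamma_a ms k psi p f R L q a t)) (at t))
         \<and> set_integrable lborel {t1..t2} (eta_a ms psi p f R L q a)
         \<and> set_integrable lborel {t1..t2} (rho_a ms k psi p f R L q a)
         \<and> set_integrable lborel {t1..t2} (gamma_a ms k psi p f R L q a)"
  proof (intro ballI allI impI)
  fix a t1 t2 assume a: "a \<in> {1..l}" and tt: "t0 \<le> t1 \<and> t1 < t2"
  define I where "I = blk ms a"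
  define E where "E r s = evec p f (s, q s) r" for r s
  have I_sub: "I \<subseteq> {..<msum ms l}" unfolding I_def by (rule blk_sub[OF a])
  have finI: "finite I" unfolding I_def by simp
  have phi_eq: "phi_a ms p f q a = (\<lambda>s. sqrt (\<Sum>r\<in>I. (E r s)^2))"
    by (rule ext) (simp add: phi_a_def bnorm_def E_def I_def)
  have qac0: "abs_cont_on q t0 t2" using q_ac tt by auto
  have qac: "abs_cont_on q t1 t2" by (rule ac_sub[OF qac0]) (use tt in auto)
  have qc: "continuous_on {t1..t2} q" by (rule ac_cont[OF qac])
  have AC: "abs_cont_on (phi_a ms p f q a) t1 t2"
  proof -
    have "bounded (q ` {t1..t2})" by (rule compact_imp_bounded[OF compact_continuous_image[OF qc compact_Icc]])
    then obtain Mq where Mq: "\<forall>t\<in>{t1..t2}. norm (q t) \<le> Mq" unfolding bounded_iff by auto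
    define K where "K = {t1..t2} \<times> cball (0::real^'n) Mq"
    have Kc: "convex K" "compact K" unfolding K_def
      by (auto intro!: convex_Times compact_Times)
    have trajK: "(t, q t) \<in> K" if "t \<in> {t1..t2}" for t
      using Mq that unfolding K_def by auto
    have lipr: "\<exists>Lr. \<forall>x\<in>K. \<forall>y\<in>K. \<bar>evec p f x r - evec p f y r\<bar> \<le> Lr * norm (x - y)"
      if r: "r \<in> I" for r
    proof -
      have rm: "r < msum ms l" using r I_sub by auto
      obtain Kf where Kf: "\<forall>x\<in>K. \<forall>y\<in>K. \<bar>f r x - f r y\<bar> \<le> Kf * norm (x - y)"
      proof -
        have "\<exists>B. \<forall>x\<in>K. \<forall>y\<in>K. \<bar>f r x - f r y\<bar> \<le> B * norm (x - y)"
        proof (rule lip_C1[OF Kc])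
          show "\<And>x. f r differentiable (at x)" using f_diff rm by blast
          show "continuous_on UNIV (\<lambda>x. frechet_derivative (f r) (at x) (1, 0))"
            using Df_cont rm unfolding ft_def by blast
          fix j
          have "continuous_on UNIV (\<lambda>x. Fq f x r $ j)" using Df_cont rm by blast
          then show "continuous_on UNIV (\<lambda>x. frechet_derivative (f r) (at x) (0, axis j 1))"
            unfolding Fq_def by simp
        qed
        then show ?thesis using that by blast
      qed
      obtain Kp where Kp: "\<forall>x\<in>{t1..t2}. \<forall>y\<in>{t1..t2}. \<bar>p r x - p r y\<bar> \<le> Kp * \<bar>x - y\<bar>"
      proof -
        have "\<exists>B. \<forall>x\<in>{t1..t2}. \<forall>y\<in>{t1..t2}. \<bar>p r x - p r y\<bar> \<le> B * \<bar>x - y\<bar>"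
        proof (rule lip_p)
          show "\<And>t. p r differentiable (at t)" using p_diff rm by blast
          have "pdot p r = deriv (p r)" by (rule ext) (simp add: pdot_def)
          then show "continuous_on UNIV (deriv (p r))" using pdot_cont rm by metis
        qed
        then show ?thesis using that by blast
      qed
      have "\<bar>evec p f x r - evec p f y r\<bar> \<le> (\<bar>Kp\<bar> + \<bar>Kf\<bar>) * norm (x - y)" if x: "x \<in> K" and y: "y \<in> K" for x y
      proof -
        have fx: "fst x \<in> {t1..t2}" "fst y \<in> {t1..t2}" using x y unfolding K_def by auto
        have exy: "(fst x - fst y, snd x - snd y) = x - y" by (simp add: prod_eq_iff)
        have nf: "\<bar>fst x - fst y\<bar> \<le> norm (x - y)"
          using norm_fst_le[of "fst x - fst y" "snd x - snd y"] unfolding exy by simp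
        have "\<bar>evec p f x r - evec p f y r\<bar> \<le> \<bar>p r (fst x) - p r (fst y)\<bar> + \<bar>f r x - f r y\<bar>"
          unfolding evec_def by linarith
        also have "\<dots> \<le> \<bar>Kp\<bar> * norm (x - y) + \<bar>Kf\<bar> * norm (x - y)"
        proof (rule add_mono)
          have "\<bar>p r (fst x) - p r (fst y)\<bar> \<le> Kp * \<bar>fst x - fst y\<bar>" using Kp fx by blast
          also have "\<dots> \<le> \<bar>Kp\<bar> * \<bar>fst x - fst y\<bar>" by (simp add: mult_right_mono)
          also have "\<dots> \<le> \<bar>Kp\<bar> * norm (x - y)" using nf by (simp add: mult_left_mono)
          finally show "\<bar>p r (fst x) - p r (fst y)\<bar> \<le> \<bar>Kp\<bar> * norm (x - y)" .
          have "\<bar>f r x - f r y\<bar> \<le> Kf * norm (x - y)" using Kf x y by blast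
          also have "\<dots> \<le> \<bar>Kf\<bar> * norm (x - y)" by (simp add: mult_right_mono)
          finally show "\<bar>f r x - f r y\<bar> \<le> \<bar>Kf\<bar> * norm (x - y)" .
        qed
        finally show ?thesis by (simp add: algebra_simps)
      qed
      then show ?thesis by blast
    qed
    then obtain Lr where Lr: "\<forall>r\<in>I. \<forall>x\<in>K. \<forall>y\<in>K. \<bar>evec p f x r - evec p f y r\<bar> \<le> Lr r * norm (x - y)"
      by metis
    define H where "H x = L2_set (\<lambda>r. evec p f x r) I" for x
    have lipH: "\<bar>H x - H y\<bar> \<le> (\<Sum>r\<in>I. Lr r) * norm (x - y)" if "x \<in> K" "y \<in> K" for x y
    proof -
      have "\<bar>H x - H y\<bar> \<le> (\<Sum>r\<in>I. \<bar>evec p f x r - evec p f y r\<bar>)" unfolding H_def by (rule L2_diff_le)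
      also have "\<dots> \<le> (\<Sum>r\<in>I. Lr r * norm (x - y))" by (rule sum_mono) (use Lr that in blast)
      also have "\<dots> = (\<Sum>r\<in>I. Lr r) * norm (x - y)" by (simp add: sum_distrib_right)
      finally show ?thesis .
    qed
    have "abs_cont_on (\<lambda>t. H (t, q t)) t1 t2"
      by (rule ac_lip[OF ac_pair[OF qac] trajK lipH])
    moreover have "(\<lambda>t. H (t, q t)) = phi_a ms p f q a"
      by (rule ext) (simp add: H_def phi_a_def bnorm_def L2_set_def I_def)
    ultimately show ?thesis by simp
  qed
  have DER: "AE t in lborel. t \<in> {t1..t2} \<longrightarrow>
              (phi_a ms p f q a has_real_derivative
                 (- rho_a ms k psi p f R L q a t * phi_a ms p f q a t
                  + gamma_a ms k psi p f R L q a t)) (at t)"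
  proof -
    define bad where "bad = (\<Union>r\<in>I. {t. E r t = 0 \<and> (\<exists>D. D \<noteq> 0 \<and> (E r has_real_derivative D) (at t))})"
    have "countable bad" unfolding bad_def
      by (intro countable_UN countable_finite[OF finI] countable_bad)
    then have AEbad: "AE t in lborel. t \<notin> bad" by (intro AE_not_in countable_imp_null_set_lborel)
    show ?thesis using q_ode AEbad
    proof eventually_elim
      case (elim t)
      show ?case
      proof
        assume t: "t \<in> {t1..t2}"
        then have "t \<ge> t0" using tt by auto
        then have qd: "(q has_vector_derivative uctrl ms l k psi p f R L (t, q t)) (at t)" using elim by blast
        define x where "x = (t, q t)"
        define D where "D r = bvec ms k psi p f R L x a r - k a * psi a x * (\<Sum>s\<in>I. Amat ms R f L x a a r s * evec p f x s)" for r
        have ED: "(E r has_real_derivative D r) (at t)" if r: "r \<in> I" for r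
        proof -
          have rm: "r < msum ms l" using r I_sub by auto
          have "((\<lambda>s. evec p f (s, q s) r) has_real_derivative
             (pdot p r t - ft f (t, q t) r - Fq f (t, q t) r \<bullet> uctrl ms l k psi p f R L (t, q t))) (at t)"
            by (rule e_deriv[OF _ qd]) (use f_diff p_diff rm in blast)+
          moreover have "pdot p r t - ft f (t, q t) r - Fq f (t, q t) r \<bullet> uctrl ms l k psi p f R L (t, q t) = D r"
            using fq_u[OF a _ L_lower, where r=r and x="(t, q t)" and p=p and k=k and psi=psi and R=R] r unfolding D_def x_def I_def by simp
          ultimately show ?thesis unfolding E_def by simp
        qed
        have Et: "E r t = evec p f x r" for r unfolding E_def x_def ..
        have phit: "phi_a ms p f q a t = sqrt (\<Sum>r\<in>I. (E r t)^2)" using phi_eq by simp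
        have rho_t: "rho_a ms k psi p f R L q a t = k a * psi a x * (pinv (phi_a ms p f q a t))\<^sup>2 *
            (\<Sum>r\<in>I. E r t * (\<Sum>s\<in>I. Amat ms R f L x a a r s * E s t))"
          unfolding rho_a_def Let_def x_def I_def E_def ..
        have gamma_t: "gamma_a ms k psi p f R L q a t = pinv (phi_a ms p f q a t) *
            (\<Sum>r\<in>I. E r t * bvec ms k psi p f R L x a r)"
          unfolding gamma_a_def Let_def x_def I_def E_def ..
        show "(phi_a ms p f q a has_real_derivative
                 (- rho_a ms k psi p f R L q a t * phi_a ms p f q a t
                  + gamma_a ms k psi p f R L q a t)) (at t)"
        proof (cases "(\<Sum>r\<in>I. (E r t)^2) > 0")
          case True
          define \<phi> where "\<phi> = sqrt (\<Sum>r\<in>I. (E r t)^2)"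
          have pp: "\<phi> > 0" using True unfolding \<phi>_def by simp
          have d1: "(phi_a ms p f q a has_real_derivative (\<Sum>r\<in>I. E r t * D r) / \<phi>) (at t)"
            unfolding phi_eq \<phi>_def by (rule sqrt_sum_deriv[OF finI ED True])
          have "(\<Sum>r\<in>I. E r t * D r) = (\<Sum>r\<in>I. E r t * bvec ms k psi p f R L x a r)
              - k a * psi a x * (\<Sum>r\<in>I. E r t * (\<Sum>s\<in>I. Amat ms R f L x a a r s * E s t))"
            unfolding D_def Et by (simp add: right_diff_distrib sum_subtractf sum_distrib_left mult_ac)
          then have "(\<Sum>r\<in>I. E r t * D r) / \<phi> = - rho_a ms k psi p f R L q a t * phi_a ms p f q a t
                  + gamma_a ms k psi p f R L q a t"
            unfolding rho_t gamma_t phit \<phi>_def[symmetric] using pp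
            by (simp add: pinv_def field_simps power2_eq_square)
          then show ?thesis using d1 by simp
        next
        case False
          have nn: "0 \<le> (\<Sum>r\<in>I. (E r t)^2)" by (simp add: sum_nonneg)
          then have s0: "(\<Sum>r\<in>I. (E r t)^2) = 0" using False by linarith
          have z: "\<And>r. r \<in> I \<Longrightarrow> E r t = 0"
            using sum_nonneg_eq_0_iff[OF finI, of "\<lambda>r. (E r t)^2"] s0 by simp
          have D0: "D r = 0" if r: "r \<in> I" for r
          proof (rule ccontr)
            assume "D r \<noteq> 0"
            then have "t \<in> bad" unfolding bad_def using ED[OF r] z[OF r] r by blast
            then show False using elim by blast
          qed
          have "(phi_a ms p f q a has_real_derivative 0) (at t)"
            unfolding phi_eq by (rule sqrt_sum_deriv0[OF finI]) (use ED D0 z in auto)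
          moreover have "phi_a ms p f q a t = 0" using phit z by simp
          ultimately show ?thesis using gamma_t by (simp add: pinv_def)
        qed
      qed
    qed
  qed
  define M where "M = restrict_space lborel {t1..t2}"
  define S where "S = {t1..t2}"
  have S0: "{t1..t2} \<subseteq> {t0..}" using tt by auto
  have trc: "continuous_on {t1..t2} (\<lambda>t. (t, q t))" by (intro continuous_on_Pair continuous_on_id qc)
  have bs: "\<And>b s. b \<in> {1..l} \<Longrightarrow> s \<in> blk ms b \<Longrightarrow> s < msum ms l" using blk_sub by blast
  have gC: "good M S (\<lambda>t. Cmat R f (t, q t) i j)" if "i < msum ms l" "j < msum ms l" for i j
  proof -
    have "(\<lambda>t. Cmat R f (t, q t) i j) \<in> borel_measurable M"
      unfolding M_def by (rule meas_sub[OF _ S0]) (use A1_meas that in blast)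
    moreover obtain B where "\<forall>x. \<forall>i<msum ms l. \<forall>j<msum ms l. \<bar>Cmat R f x i j\<bar> \<le> B" using A1_bdd by blast
    ultimately show ?thesis unfolding good_def using that by blast
  qed
  have gL: "good M S (\<lambda>t. L (t, q t) i j)" if "i < msum ms l" "j < msum ms l" for i j
  proof -
    have "(\<lambda>t. L (t, q t) i j) \<in> borel_measurable M"
      unfolding M_def by (rule meas_sub[OF _ S0]) (use A2_meas that in blast)
    moreover obtain B where "\<forall>x. \<forall>i<msum ms l. \<forall>j<msum ms l. \<bar>L x i j\<bar> \<le> B" using A2_bdd by blast
    ultimately show ?thesis unfolding good_def using that by blast
  qed
  have gE: "good M S (\<lambda>t. evec p f (t, q t) r)" if "r < msum ms l" for r
  proof -
    have cp: "continuous_on UNIV (p r)"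
      using p_diff that by (intro continuous_at_imp_continuous_on ballI differentiable_imp_continuous_within) blast
    have cf: "continuous_on UNIV (f r)"
      using f_diff that by (intro continuous_at_imp_continuous_on ballI differentiable_imp_continuous_within) blast
    have "continuous_on {t1..t2} (\<lambda>t. p r t - f r (t, q t))"
      by (intro continuous_intros continuous_on_subset[OF cp] continuous_on_compose2[OF cf trc]) auto
    then show ?thesis unfolding M_def S_def evec_def by (simp add: good_cont)
  qed
  have gF: "good M S (\<lambda>t. ft f (t, q t) i)" if "i < msum ms l" for i
  proof -
    have c: "continuous_on UNIV (\<lambda>x. ft f x i)" using Df_cont that by blast
    have "continuous_on {t1..t2} (\<lambda>t. ft f (t, q t) i)"
      by (rule continuous_on_compose2[OF c trc]) auto
    then show ?thesis unfolding M_def S_def by (rule good_cont)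
  qed
  have gP: "good M S (\<lambda>t. pdot p i t)" if "i < msum ms l" for i
  proof -
    have "continuous_on {t1..t2} (pdot p i)"
      by (rule continuous_on_subset[of UNIV]) (use pdot_cont that in auto)
    then show ?thesis unfolding M_def S_def by (rule good_cont)
  qed
  have gS: "good M S (\<lambda>t. psi b (t, q t))" if "b \<in> {1..l}" for b
  proof -
    have c: "continuous_on UNIV (psi b)" using psi_cont that by blast
    have "continuous_on {t1..t2} (\<lambda>t. psi b (t, q t))"
      by (rule continuous_on_compose2[OF c trc]) auto
    then show ?thesis unfolding M_def S_def by (rule good_cont)
  qed
  have gA: "good M S (\<lambda>t. Amat ms R f L (t, q t) a b r s)"
    if "b \<in> {1..a}" "r < msum ms l" "s < msum ms l" for b r s
  proof -
    have bs2: "u < msum ms l" if "c \<in> {b..a}" "u \<in> blk ms c" for c u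
    proof -
      have "c \<in> {1..l}" using that \<open>b \<in> {1..a}\<close> a by auto
      then show ?thesis using bs that(2) by blast
    qed
    show ?thesis unfolding Amat_def
      by (intro good_sum good_mult gC gL finite_blk finite_atLeastAtMost that(2) that(3) bs2) auto
  qed
  have gPhi: "good M S (phi_a ms p f q a)"
    unfolding phi_eq E_def
    by (intro good_sqrt good_sum good_sq gE finI) (use I_sub in auto)
  have INT_eta: "set_integrable lborel {t1..t2} (eta_a ms psi p f R L q a)"
  proof -
    have "good M S (eta_a ms psi p f R L q a)"
      unfolding eta_a_def Let_def bnorm_def
      by (intro good_sqrt good_sum good_sq good_mult gS gC gL gE finite_blk a)
        (use I_sub[unfolded I_def] in auto)
    then show ?thesis unfolding M_def S_def by (rule good_int)
  qed
  have INT_rho: "set_integrable lborel {t1..t2} (rho_a ms k psi p f R L q a)"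
  proof -
    define Q where "Q t = (\<Sum>r\<in>I. E r t * (\<Sum>s\<in>I. Amat ms R f L (t, q t) a a r s * E s t))" for t
    have gQ: "good M S Q" unfolding Q_def E_def
      by (intro good_sum good_mult gE gA finI) (use I_sub a in auto)
    have rho_eq: "rho_a ms k psi p f R L q a = (\<lambda>t. k a * psi a (t, q t) * (pinv (phi_a ms p f q a t))^2 * Q t)"
      by (rule ext) (simp add: rho_a_def Let_def Q_def E_def I_def)
    have meas: "rho_a ms k psi p f R L q a \<in> borel_measurable M"
      unfolding rho_eq
      by (intro borel_measurable_times borel_measurable_power borel_measurable_const meas_pinv
          good_meas[OF gS[OF a]] good_meas[OF gPhi] good_meas[OF gQ])
    define G where "G t = \<bar>k a\<bar> * (\<Sum>r\<in>I. \<Sum>s\<in>I. \<bar>Amat ms R f L (t, q t) a a r s\<bar>)" for t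
    have gG: "good M S G" unfolding G_def
      by (intro good_mult good_const good_sum good_abs gA finI) (use I_sub a in auto)
    have "good M S (rho_a ms k psi p f R L q a)"
    proof (rule good_dom[OF gG meas])
      fix t assume "t \<in> S"
      have ps: "\<bar>psi a (t, q t)\<bar> \<le> 1" using psi_range a by auto
      have qb: "(pinv (phi_a ms p f q a t))^2 * \<bar>Q t\<bar> \<le> (\<Sum>r\<in>I. \<Sum>s\<in>I. \<bar>Amat ms R f L (t, q t) a a r s\<bar>)"
        unfolding phi_eq Q_def by (rule quad_bound[OF finI])
      have "\<bar>rho_a ms k psi p f R L q a t\<bar> = \<bar>k a\<bar> * \<bar>psi a (t, q t)\<bar> * ((pinv (phi_a ms p f q a t))^2 * \<bar>Q t\<bar>)"
        unfolding rho_eq by (simp add: abs_mult)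
      also have "\<dots> \<le> \<bar>k a\<bar> * 1 * (\<Sum>r\<in>I. \<Sum>s\<in>I. \<bar>Amat ms R f L (t, q t) a a r s\<bar>)"
        by (intro mult_mono ps qb mult_left_mono) (auto intro: sum_nonneg)
      also have "\<dots> \<le> \<bar>G t\<bar>" unfolding G_def by simp
      finally show "\<bar>rho_a ms k psi p f R L q a t\<bar> \<le> \<bar>G t\<bar>" .
    qed
    then show ?thesis unfolding M_def S_def by (rule good_int)
  qed
  have INT_gamma: "set_integrable lborel {t1..t2} (gamma_a ms k psi p f R L q a)"
  proof -
    define Bv where "Bv r t = bvec ms k psi p f R L (t, q t) a r" for r t
    have gB: "good M S (Bv r)" if r: "r \<in> I" for r
    proof -
      have rm: "r < msum ms l" using r I_sub by auto
      have h1: "s < msum ms l" if "b \<in> {1..a}" "s \<in> blk ms b" for b s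
        using bs[of b s] that a by auto
      have h2: "s < msum ms l" if "b \<in> {1..<a}" "s \<in> blk ms b" for b s
        using bs[of b s] that a by auto
      have h3: "b \<in> {1..l}" if "b \<in> {1..a}" for b using that a by auto
      have h4: "b \<in> {1..l}" if "b \<in> {1..<a}" for b using that a by auto
      have h5: "b \<in> {1..a}" if "b \<in> {1..<a}" for b using that by auto
      show ?thesis unfolding Bv_def bvec_def fst_conv
        by (intro good_diff good_sum good_mult good_const gP gF gA gS gE rm finite_blk finite_atLeastAtMost
          finite_atLeastLessThan) (use a in \<open>auto intro: h1 h2 h3 h4 h5\<close>)
    qed
    define Q where "Q t = (\<Sum>r\<in>I. E r t * Bv r t)" for t
    have gQ: "good M S Q" unfolding Q_def E_def
      by (intro good_sum good_mult gE gB finI) (use I_sub in auto)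
    have g_eq: "gamma_a ms k psi p f R L q a = (\<lambda>t. pinv (phi_a ms p f q a t) * Q t)"
      by (rule ext) (simp add: gamma_a_def Let_def Q_def E_def I_def Bv_def)
    have meas: "gamma_a ms k psi p f R L q a \<in> borel_measurable M"
      unfolding g_eq by (intro borel_measurable_times meas_pinv good_meas[OF gPhi] good_meas[OF gQ])
    define G where "G t = (\<Sum>r\<in>I. \<bar>Bv r t\<bar>)" for t
    have gG: "good M S G" unfolding G_def by (intro good_sum good_abs gB finI)
    have "good M S (gamma_a ms k psi p f R L q a)"
    proof (rule good_dom[OF gG meas])
      fix t assume "t \<in> S"
      have "\<bar>gamma_a ms k psi p f R L q a t\<bar> \<le> G t"
        unfolding g_eq phi_eq Q_def G_def by (rule lin_bound[OF finI])
      then show "\<bar>gamma_a ms k psi p f R L q a t\<bar> \<le> \<bar>G t\<bar>" by simp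
    qed
    then show ?thesis unfolding M_def S_def by (rule good_int)
  qed
  show "abs_cont_on (phi_a ms p f q a) t1 t2
         \<and> (AE t in lborel. t \<in> {t1..t2} \<longrightarrow>
              (phi_a ms p f q a has_real_derivative
                 (- rho_a ms k psi p f R L q a t * phi_a ms p f q a t
                  + gamma_a ms k psi p f R L q a t)) (at t))
         \<and> set_integrable lborel {t1..t2} (eta_a ms psi p f R L q a)
         \<and> set_integrable lborel {t1..t2} (rho_a ms k psi p f R L q a)
         \<and> set_integrable lborel {t1..t2} (gamma_a ms k psi p f R L q a)"
    using AC DER INT_eta INT_rho INT_gamma by blast
qed


end
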